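(* For any generalized causal team $T$ over a signature $\sigma$: $T\models^g\Xi^{\{(s,\mathcal F),(t,\mathcal G)\}}$ for all $(s,\mathcal F),(t,\mathcal G)\in\mathbb S_\sigma$ with $\mathcal F\not\sim\mathcal G$, if and only if $T$ is uniform.
   Context: A signature $\sigma=(\mathrm{Dom},\mathrm{Ran})$: $\mathrm{Dom}$ nonempty finite set of variables, each with nonempty finite range $\mathrm{Ran}(X)$; $\mathbf X=\mathbf x$ abbreviates $X_1=x_1\wedge\dots\wedge X_n=x_n$ ($\mathbf x\in\prod\mathrm{Ran}(X_i)$), inconsistent if it contains $X=x,X=x'$ with $x\ne x'$. ${=}(V)$ is the constancy atom; $\bot$ abbreviates $X=x\wedge\neg(X=x)$; $\alpha\supset\beta$ abbreviates $\neg\alpha\vee\beta$; empty $\vee$-disjunction is $\bot$. Systems of functions $\mathcal F$: for each $V\in\mathrm{En}(\mathcal F)\subseteq\mathrm{Dom}$ parents $PA^{\mathcal F}_V\subseteq\mathrm{Dom}\setminus\{V\}$ and $\mathcal F_V:\mathrm{Ran}(PA^{\mathcal F}_V)\to\mathrm{Ran}(V)$; $\mathrm{Ex}(\mathcal F)=\mathrm{Dom}\setminus\mathrm{En}(\mathcal F)$; only recursive (acyclic parent graph), forming $\mathbb F_\sigma$. Assignments form $\mathbb A_\sigma$; $s$ compatible with $\mathcal F$ if $s(V)=\mathcal F_V(s(PA^{\mathcal F}_V))$ for $V\in\mathrm{En}(\mathcal F)$; $\mathbb S_\sigma$ = set of compatible pairs. A generalized causal team is a subset $T\subseteq\mathbb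 S_\sigma$; $T^-=\{s:(s,\mathcal F)\in T\}$. For consistent $\mathbf X=\mathbf x$: $\mathcal F_{\mathbf X=\mathbf x}$ restricts $\mathcal F$ to $\mathrm{En}(\mathcal F)\setminus\mathbf X$; $s^{\mathcal F}_{\mathbf X=\mathbf x}$: $X_i\mapsto x_i$, $V\mapsto s(V)$ on $\mathrm{Ex}(\mathcal F)\setminus\mathbf X$, $V\mapsto\mathcal F_V(s^{\mathcal F}_{\mathbf X=\mathbf x}(PA^{\mathcal F}_V))$ on $\mathrm{En}(\mathcal F)\setminus\mathbf X$; $T_{\mathbf X=\mathbf x}=\{(s^{\mathcal F}_{\mathbf X=\mathbf x},\mathcal F_{\mathbf X=\mathbf x}):(s,\mathcal F)\in T\}$. $\models^g$: $T\models X=x$ iff $s(X)=x$ for all $s\in T^-$; $T\models{=}(V)$ iff $s(V)=s'(V)$ for all $s,s'\in T^-$; $T\models\neg\alpha$ iff $\{(s,\mathcal F)\}\not\models\alpha$ for all $(s,\mathcal F)\in T$; $\wedge$ classical; $T\models\varphi\vee\psi$ iff $T=T_1\cup T_2$ with $T_1\models\varphi$, $T_2\models\psi$; $T\models\mathbf X=\mathbf x\;\Box\!\!\rightarrow\varphi$ iff $\mathbf X=\mathbf x$ inconsistent or $T_{\mathbf X=\mathbf x}\models\varphi$. $\mathrm{Cn}(\mathcal F)=\{V\in\mathrm{En}(\mathcal F):\mathcal F_V\text{ constant}\}$; $\mathcal F_V\sim\mathcal G_V$ iff $\mathcal F_V(\mathbf x\mathbf y)=\mathcal G_V(\mathbf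 x\mathbf z)$ for all $\mathbf x\in\mathrm{Ran}(PA^{\mathcal F}_V\cap PA^{\mathcal G}_V)$, $\mathbf y\in\mathrm{Ran}(PA^{\mathcal F}_V\setminus PA^{\mathcal G}_V)$, $\mathbf z\in\mathrm{Ran}(PA^{\mathcal G}_V\setminus PA^{\mathcal F}_V)$; $\mathcal F\sim\mathcal G$ iff $\mathrm{En}(\mathcal F)\setminus\mathrm{Cn}(\mathcal F)=\mathrm{En}(\mathcal G)\setminus\mathrm{Cn}(\mathcal G)$ and $\mathcal F_V\sim\mathcal G_V$ for each such $V$. $T$ is uniform if $\mathcal F\sim\mathcal G$ for all $(s,\mathcal F),(t,\mathcal G)\in T$. $T^{\mathcal F}=\{(s,\mathcal G)\in T:\mathcal G\sim\mathcal F\}$; $S\approx T$ iff $(S^{\mathcal F})^-=(T^{\mathcal F})^-$ for all $\mathcal F$; on pairs $(s,\mathcal F)\approx(t,\mathcal G)$ iff $s=t$ and $\mathcal F\sim\mathcal G$; $T/_{\approx}$ = set of $\approx$-classes of elements of $T$. $S\preccurlyeq T$ iff $S\approx R$ for some $R\subseteq T$ ($\emptyset\preccurlyeq T$ always). Formulas: $\Theta^{A}:=\bigvee_{s\in A}\bigwedge_{V\in\mathrm{Dom}}V=s(V)$. With $\mathbf W_V$ listing $\mathrm{Dom}\setminus\{V\}$: $\Phi^{\mathcal F}:=\bigwedge_{V\in\mathrm{En}(\mathcal F)\setminus\mathrm{Cn}(\mathcal F)}\eta(V)\wedge\bigwedge_{V\notin\mathrm{En}(\mathcal F)\setminus\mathrm{Cn}(\mathcal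 F)}\xi(V)$, $\eta(V)$ the conjunction of all $(\mathbf W=\mathbf w\wedge PA^{\mathcal F}_V=\mathbf p)\;\Box\!\!\rightarrow V=\mathcal F_V(\mathbf p)$ ($\mathbf W$ listing $\mathrm{Dom}\setminus(PA^{\mathcal F}_V\cup\{V\})$, $\mathbf w\in\mathrm{Ran}(\mathbf W)$, $\mathbf p\in\mathrm{Ran}(PA^{\mathcal F}_V)$), $\xi(V)$ the conjunction of all $V=v\supset(\mathbf W_V=\mathbf w\;\Box\!\!\rightarrow V=v)$. $\chi:=\bigwedge_V\bigwedge_{\mathbf w\in\mathrm{Ran}(\mathbf W_V)}(\mathbf W_V=\mathbf w\;\Box\!\!\rightarrow{=}(V))\wedge\bigwedge_V{=}(V)$; $\chi_0:=\bot$, $\chi_k:=\chi\vee\dots\vee\chi$ ($k$ disjuncts). For a nonempty generalized causal team $T$ with $|T/_{\approx}|=k+1$: $\Xi^T:=\chi_k\vee\Theta^{\mathbb A_\sigma\setminus T^-}\vee\bigvee\{\Theta^{\{s\}}\wedge\Phi^{\mathcal F}:s\in T^-,\ \mathcal F\in\mathbb F_\sigma,\ \{(s,\mathcal F)\}\not\preccurlyeq T\}$. *)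

theory Defs
  imports "HOL-Library.FuncSet"
begin

record ('v,'a) sig =
  Dom :: "'v set"
  Ran :: "'v \<Rightarrow> 'a set"

definition wf_sig :: "('v,'a) sig \<Rightarrow> bool" where
  "wf_sig \<sigma> \<longleftrightarrow> finite (Dom \<sigma>) \<and> Dom \<sigma> \<noteq> {} \<and>
     (\<forall>V\<in>Dom \<sigma>. finite (Ran \<sigma> V) \<and> Ran \<sigma> V \<noteq> {})"

definition RanS :: "('v,'a) sig \<Rightarrow> 'v set \<Rightarrow> ('v \<Rightarrow> 'a) set" where
  "RanS \<sigma> W = PiE W (Ran \<sigma>)"

definition Asg :: "('v,'a) sig \<Rightarrow> ('v \<Rightarrow> 'a) set" where
  "Asg \<sigma> = RanS \<sigma> (Dom \<sigma>)"

text \<open>A system of functions: endogenous variables, parent sets, and for each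
  endogenous V a function from Ran(PA_V) (extensional assignments on PA_V) to Ran(V).
  Canonical (extensional) representation, see wf_sys.\<close>
record ('v,'a) sysf =
  En :: "'v set"
  PA :: "'v \<Rightarrow> 'v set"
  Fn :: "'v \<Rightarrow> ('v \<Rightarrow> 'a) \<Rightarrow> 'a"

definition parent_rel :: "('v,'a) sysf \<Rightarrow> ('v \<times> 'v) set" where
  "parent_rel F = {(W,V). V \<in> En F \<and> W \<in> PA F V}"

definition wf_sys :: "('v,'a) sig \<Rightarrow> ('v,'a) sysf \<Rightarrow> bool" where
  "wf_sys \<sigma> F \<longleftrightarrow> En F \<subseteq> Dom \<sigma> \<and>
     (\<forall>V\<in>En F. PA F V \<subseteq> Dom \<sigma> - {V} \<and>
                Fn F V \<in> RanS \<sigma> (PA F V) \<rightarrow> Ran \<sigma> V \<and>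
                Fn F V \<in> extensional (RanS \<sigma> (PA F V))) \<and>
     (\<forall>V. V \<notin> En F \<longrightarrow> PA F V = {} \<and> Fn F V = (\<lambda>_. undefined)) \<and>
     acyclic (parent_rel F)"

definition Sys :: "('v,'a) sig \<Rightarrow> ('v,'a) sysf set" where
  "Sys \<sigma> = {F. wf_sys \<sigma> F}"

definition compatible :: "('v \<Rightarrow> 'a) \<Rightarrow> ('v,'a) sysf \<Rightarrow> bool" where
  "compatible s F \<longleftrightarrow> (\<forall>V\<in>En F. s V = Fn F V (restrict s (PA F V)))"

definition SPairs :: "('v,'a) sig \<Rightarrow> (('v \<Rightarrow> 'a) \<times> ('v,'a) sysf) set" where
  "SPairs \<sigma> = {(s,F). s \<in> Asg \<sigma> \<and> F \<in> Sys \<sigma> \<and> compatible s F}"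

type_synonym ('v,'a) team = "(('v \<Rightarrow> 'a) \<times> ('v,'a) sysf) set"

definition gteam :: "('v,'a) sig \<Rightarrow> ('v,'a) team \<Rightarrow> bool" where
  "gteam \<sigma> T \<longleftrightarrow> T \<subseteq> SPairs \<sigma>"

text \<open>A conjunction X1=x1 and ... and Xn=xn is represented by the list of pairs (Xi,xi).\<close>
definition consistent :: "('v \<times> 'a) list \<Rightarrow> bool" where
  "consistent xs \<longleftrightarrow> (\<forall>(X,x)\<in>set xs. \<forall>(X',x')\<in>set xs. X = X' \<longrightarrow> x = x')"

definition int_sys :: "('v \<times> 'a) list \<Rightarrow> ('v,'a) sysf \<Rightarrow> ('v,'a) sysf" where
  "int_sys xs F =
     (let E = En F - fst ` set xs in
      \<lparr> En = E,
        PA = (\<lambda>V. if V \<in> E then PA F V else {}),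
        Fn = (\<lambda>V. if V \<in> E then Fn F V else (\<lambda>_. undefined)) \<rparr>)"

definition int_asg :: "('v \<times> 'a) list \<Rightarrow> ('v,'a) sysf \<Rightarrow> ('v \<Rightarrow> 'a) \<Rightarrow> ('v \<Rightarrow> 'a)" where
  "int_asg xs F s =
     (THE t. \<forall>V.
        (V \<in> fst ` set xs \<longrightarrow> t V = the (map_of xs V)) \<and>
        (V \<notin> fst ` set xs \<and> V \<notin> En F \<longrightarrow> t V = s V) \<and>
        (V \<notin> fst ` set xs \<and> V \<in> En F \<longrightarrow> t V = Fn F V (restrict t (PA F V))))"

definition int_team :: "('v \<times> 'a) list \<Rightarrow> ('v,'a) team \<Rightarrow> ('v,'a) team" where
  "int_team xs T = (\<lambda>(s,F). (int_asg xs F s, int_sys xs F)) ` T"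

datatype ('v,'a) fml =
    Eq 'v 'a
  | Dep 'v
  | Neg "('v,'a) fml"
  | And "('v,'a) fml" "('v,'a) fml"
  | Or "('v,'a) fml" "('v,'a) fml"
  | Cf "('v \<times> 'a) list" "('v,'a) fml"

primrec gsat :: "('v,'a) team \<Rightarrow> ('v,'a) fml \<Rightarrow> bool" where
  "gsat T (Eq X x) \<longleftrightarrow> (\<forall>(s,F)\<in>T. s X = x)"
| "gsat T (Dep V) \<longleftrightarrow> (\<forall>(s,F)\<in>T. \<forall>(s',F')\<in>T. s V = s' V)"
| "gsat T (Neg \<alpha>) \<longleftrightarrow> (\<forall>p\<in>T. \<not> gsat {p} \<alpha>)"
| "gsat T (And \<phi> \<psi>) \<longleftrightarrow> gsat T \<phi> \<and> gsat T \<psi>"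
| "gsat T (Or \<phi> \<psi>) \<longleftrightarrow> (\<exists>T1 T2. T = T1 \<union> T2 \<and> gsat T1 \<phi> \<and> gsat T2 \<psi>)"
| "gsat T (Cf xs \<phi>) \<longleftrightarrow> (\<not> consistent xs \<or> gsat (int_team xs T) \<phi>)"

text \<open>bot abbreviates X=x and not X=x (the choice of X,x is immaterial).\<close>
definition Bot :: "('v,'a) fml" where
  "Bot = And (Eq undefined undefined) (Neg (Eq undefined undefined))"

definition Imp :: "('v,'a) fml \<Rightarrow> ('v,'a) fml \<Rightarrow> ('v,'a) fml" where
  "Imp \<alpha> \<beta> = Or (Neg \<alpha>) \<beta>"

fun BigOr :: "('v,'a) fml list \<Rightarrow> ('v,'a) fml" where
  "BigOr [] = Bot"
| "BigOr [\<phi>] = \<phi>"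
| "BigOr (\<phi> # \<psi>s) = Or \<phi> (BigOr \<psi>s)"

text \<open>Empty conjunction is the tautology not-bot (only used for nonempty lists here).\<close>
fun BigAnd :: "('v,'a) fml list \<Rightarrow> ('v,'a) fml" where
  "BigAnd [] = Neg Bot"
| "BigAnd [\<phi>] = \<phi>"
| "BigAnd (\<phi> # \<psi>s) = And \<phi> (BigAnd \<psi>s)"

definition lst :: "'b set \<Rightarrow> 'b list" where
  "lst S = (SOME xs. set xs = S \<and> distinct xs)"

text \<open>The formula W=w for a set of variables W listed in some order, w in Ran(W).\<close>
definition pairs :: "'v set \<Rightarrow> ('v \<Rightarrow> 'a) \<Rightarrow> ('v \<times> 'a) list" where
  "pairs W w = map (\<lambda>v. (v, w v)) (lst W)"

definition Theta :: "('v,'a) sig \<Rightarrow> ('v \<Rightarrow> 'a) set \<Rightarrow> ('v,'a) fml" where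
  "Theta \<sigma> A = BigOr (map (\<lambda>s. BigAnd (map (\<lambda>V. Eq V (s V)) (lst (Dom \<sigma>)))) (lst A))"

definition Cn :: "('v,'a) sig \<Rightarrow> ('v,'a) sysf \<Rightarrow> 'v set" where
  "Cn \<sigma> F = {V \<in> En F. \<forall>p\<in>RanS \<sigma> (PA F V). \<forall>q\<in>RanS \<sigma> (PA F V). Fn F V p = Fn F V q}"

text \<open>Juxtaposition xy of an assignment x on I and an assignment y on a disjoint set.\<close>
definition join :: "'v set \<Rightarrow> ('v \<Rightarrow> 'a) \<Rightarrow> ('v \<Rightarrow> 'a) \<Rightarrow> ('v \<Rightarrow> 'a)" where
  "join I x y = (\<lambda>v. if v \<in> I then x v else y v)"

definition fsim :: "('v,'a) sig \<Rightarrow> ('v,'a) sysf \<Rightarrow> ('v,'a) sysf \<Rightarrow> 'v \<Rightarrow> bool" where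
  "fsim \<sigma> F G V \<longleftrightarrow>
     (let I = PA F V \<inter> PA G V in
      \<forall>x\<in>RanS \<sigma> I. \<forall>y\<in>RanS \<sigma> (PA F V - PA G V). \<forall>z\<in>RanS \<sigma> (PA G V - PA F V).
         Fn F V (join I x y) = Fn G V (join I x z))"

definition ssim :: "('v,'a) sig \<Rightarrow> ('v,'a) sysf \<Rightarrow> ('v,'a) sysf \<Rightarrow> bool" where
  "ssim \<sigma> F G \<longleftrightarrow> En F - Cn \<sigma> F = En G - Cn \<sigma> G \<and>
     (\<forall>V \<in> En F - Cn \<sigma> F. fsim \<sigma> F G V)"

definition uniform :: "('v,'a) sig \<Rightarrow> ('v,'a) team \<Rightarrow> bool" where
  "uniform \<sigma> T \<longleftrightarrow> (\<forall>(s,F)\<in>T. \<forall>(t,G)\<in>T. ssim \<sigma> F G)"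

definition subF :: "('v,'a) sig \<Rightarrow> ('v,'a) team \<Rightarrow> ('v,'a) sysf \<Rightarrow> ('v,'a) team" where
  "subF \<sigma> T F = {(s,G)\<in>T. ssim \<sigma> G F}"

definition tapprox :: "('v,'a) sig \<Rightarrow> ('v,'a) team \<Rightarrow> ('v,'a) team \<Rightarrow> bool" where
  "tapprox \<sigma> S T \<longleftrightarrow> (\<forall>F\<in>Sys \<sigma>. fst ` subF \<sigma> S F = fst ` subF \<sigma> T F)"

definition papprox :: "('v,'a) sig \<Rightarrow> (('v \<Rightarrow> 'a) \<times> ('v,'a) sysf) \<Rightarrow> (('v \<Rightarrow> 'a) \<times> ('v,'a) sysf) \<Rightarrow> bool" where
  "papprox \<sigma> p q \<longleftrightarrow> fst p = fst q \<and> ssim \<sigma> (snd p) (snd q)"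

definition quotT :: "('v,'a) sig \<Rightarrow> ('v,'a) team \<Rightarrow> ('v,'a) team set" where
  "quotT \<sigma> T = (\<lambda>p. {q\<in>T. papprox \<sigma> p q}) ` T"

definition tprec :: "('v,'a) sig \<Rightarrow> ('v,'a) team \<Rightarrow> ('v,'a) team \<Rightarrow> bool" where
  "tprec \<sigma> S T \<longleftrightarrow> (\<exists>R. R \<subseteq> T \<and> tapprox \<sigma> S R)"

definition eta :: "('v,'a) sig \<Rightarrow> ('v,'a) sysf \<Rightarrow> 'v \<Rightarrow> ('v,'a) fml" where
  "eta \<sigma> F V =
     (let W = Dom \<sigma> - (PA F V \<union> {V}) in
      BigAnd [Cf (pairs W w @ pairs (PA F V) p) (Eq V (Fn F V p)).
                w \<leftarrow> lst (RanS \<sigma> W), p \<leftarrow> lst (RanS \<sigma> (PA F V))])"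

definition xi :: "('v,'a) sig \<Rightarrow> 'v \<Rightarrow> ('v,'a) fml" where
  "xi \<sigma> V =
     (let W = Dom \<sigma> - {V} in
      BigAnd [Imp (Eq V v) (Cf (pairs W w) (Eq V v)).
                v \<leftarrow> lst (Ran \<sigma> V), w \<leftarrow> lst (RanS \<sigma> W)])"

definition Phi :: "('v,'a) sig \<Rightarrow> ('v,'a) sysf \<Rightarrow> ('v,'a) fml" where
  "Phi \<sigma> F = And (BigAnd [eta \<sigma> F V. V \<leftarrow> lst (En F - Cn \<sigma> F)])
                  (BigAnd [xi \<sigma> V. V \<leftarrow> lst (Dom \<sigma> - (En F - Cn \<sigma> F))])"

definition chi :: "('v,'a) sig \<Rightarrow> ('v,'a) fml" where
  "chi \<sigma> = And (BigAnd [Cf (pairs (Dom \<sigma> - {V}) w) (Dep V).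
                         V \<leftarrow> lst (Dom \<sigma>), w \<leftarrow> lst (RanS \<sigma> (Dom \<sigma> - {V}))])
               (BigAnd [Dep V. V \<leftarrow> lst (Dom \<sigma>)])"

fun chik :: "('v,'a) sig \<Rightarrow> nat \<Rightarrow> ('v,'a) fml" where
  "chik \<sigma> 0 = Bot"
| "chik \<sigma> (Suc 0) = chi \<sigma>"
| "chik \<sigma> (Suc (Suc k)) = Or (chi \<sigma>) (chik \<sigma> (Suc k))"

definition Xi :: "('v,'a) sig \<Rightarrow> ('v,'a) team \<Rightarrow> ('v,'a) fml" where
  "Xi \<sigma> T =
     Or (chik \<sigma> (card (quotT \<sigma> T) - 1))
        (Or (Theta \<sigma> (Asg \<sigma> - fst ` T))
            (BigOr (lst {And (Theta \<sigma> {s}) (Phi \<sigma> F) | s F.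
                          s \<in> fst ` T \<and> F \<in> Sys \<sigma> \<and> \<not> tprec \<sigma> {(s,F)} T})))"

end

theory Submission
  imports Defs
begin


lemma set_lst: "finite S \<Longrightarrow> set (lst S) = S"
  unfolding lst_def by (metis (mono_tags, lifting) finite_distinct_list someI_ex)

lemma gsat_empty[simp]: "gsat {} \<phi>"
  by (induction \<phi>) (auto simp: int_team_def)

lemma int_team_mono: "S \<subseteq> T \<Longrightarrow> int_team xs S \<subseteq> int_team xs T"
  unfolding int_team_def by auto

lemma gsat_mono: "gsat T \<phi> \<Longrightarrow> S \<subseteq> T \<Longrightarrow> gsat S \<phi>"
proof (induction \<phi> arbitrary: S T)
  case (Eq x1 x2)
  then show ?case by (simp only: gsat.simps) blast
next
  case (Dep x)
  then show ?case by (simp only: gsat.simps) blast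
next
  case (Neg \<phi>)
  then show ?case by (simp only: gsat.simps) blast
next
  case (And \<phi>1 \<phi>2)
  then show ?case by (simp only: gsat.simps) blast
next
  case (Or \<phi>1 \<phi>2)
  then obtain T1 T2 where "T = T1 \<union> T2" "gsat T1 \<phi>1" "gsat T2 \<phi>2" by auto
  then have "S = (S \<inter> T1) \<union> (S \<inter> T2)" "gsat (S \<inter> T1) \<phi>1" "gsat (S \<inter> T2) \<phi>2"
    using Or by auto
  then show ?case by (simp only: gsat.simps) blast
next
  case (Cf xs \<phi>)
  then show ?case using int_team_mono[of S T xs] by (simp only: gsat.simps) blast
qed

lemma gsat_Bot: "gsat T Bot \<longleftrightarrow> T = {}"
  unfolding Bot_def by auto

lemma gsat_BigAnd: "gsat T (BigAnd l) \<longleftrightarrow> (\<forall>\<phi>\<in>set l. gsat T \<phi>)"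
  by (induction l rule: BigAnd.induct) (auto simp: gsat_Bot)

lemma gsat_Or_I: "gsat T1 a \<Longrightarrow> gsat T2 b \<Longrightarrow> T = T1 \<union> T2 \<Longrightarrow> gsat T (Or a b)"
  by auto

lemma gsat_BigOr_elem: "gsat T (BigOr l) \<Longrightarrow> p \<in> T \<Longrightarrow> \<exists>\<phi>\<in>set l. gsat {p} \<phi>"
proof (induction l arbitrary: T rule: BigOr.induct)
  case 1 then show ?case by (auto simp: gsat_Bot)
next
  case (2 \<phi>) then show ?case using gsat_mono[of T \<phi> "{p}"] by auto
next
  case (3 \<phi> v va)
  then obtain T1 T2 where "T = T1 \<union> T2" "gsat T1 \<phi>" "gsat T2 (BigOr (v # va))" by auto
  then show ?case using 3 gsat_mono[of T1 \<phi> "{p}"] by auto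
qed

lemma gsat_BigOr_member: "\<phi> \<in> set l \<Longrightarrow> gsat T \<phi> \<Longrightarrow> gsat T (BigOr l)"
proof (induction l arbitrary: T rule: BigOr.induct)
  case (3 \<psi> v va)
  show ?case
  proof (cases "\<phi> = \<psi>")
    case True
    then show ?thesis using 3 gsat_Or_I[of T \<psi> "{}" "BigOr (v # va)" T] by simp
  next
    case False
    then show ?thesis using 3 gsat_Or_I[of "{}" \<psi> T "BigOr (v # va)" T] by simp
  qed
qed auto

lemma gsat_BigOr_intro:
  assumes "\<And>p. p \<in> T \<Longrightarrow> \<exists>\<phi>\<in>set l. gsat {p} \<phi>"
    and "\<And>\<phi> T'. \<phi> \<in> set l \<Longrightarrow> (\<And>p. p \<in> T' \<Longrightarrow> gsat {p} \<phi>) \<Longrightarrow> gsat T' \<phi>"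
  shows "gsat T (BigOr l)"
  using assms
proof (induction l arbitrary: T rule: BigOr.induct)
  case 1 then show ?case by (auto simp: gsat_Bot)
next
  case (2 \<phi>) then show ?case by auto
next
  case (3 \<phi> v va)
  let ?T1 = "{p\<in>T. gsat {p} \<phi>}" and ?T2 = "{p\<in>T. \<not> gsat {p} \<phi>}"
  have "gsat ?T1 \<phi>" using 3(3)[of \<phi> ?T1] by auto
  moreover have "gsat ?T2 (BigOr (v # va))"
    apply (rule 3(1))
    using 3(2,3) by auto
  moreover have "T = ?T1 \<union> ?T2" by auto
  ultimately show ?case by (simp only: BigOr.simps) (rule gsat_Or_I)
qed

lemma gsat_Or_single: "gsat {p} (Or a b) \<longleftrightarrow> gsat {p} a \<or> gsat {p} b"
proof
  assume "gsat {p} (Or a b)"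
  then obtain T1 T2 where "{p} = T1 \<union> T2" "gsat T1 a" "gsat T2 b" by auto
  then have "p \<in> T1 \<or> p \<in> T2" by auto
  then show "gsat {p} a \<or> gsat {p} b"
    using gsat_mono[of T1 a "{p}"] gsat_mono[of T2 b "{p}"] \<open>gsat T1 a\<close> \<open>gsat T2 b\<close> by auto
next
  assume "gsat {p} a \<or> gsat {p} b"
  then show "gsat {p} (Or a b)"
    using gsat_Or_I[of "{p}" a "{}" b "{p}"] gsat_Or_I[of "{}" a "{p}" b "{p}"] by auto
qed



lemma Sys_En: "H \<in> Sys \<sigma> \<Longrightarrow> En H \<subseteq> Dom \<sigma>"
  by (simp add: Sys_def wf_sys_def)

lemma Sys_PA: "H \<in> Sys \<sigma> \<Longrightarrow> V \<in> En H \<Longrightarrow> PA H V \<subseteq> Dom \<sigma> - {V}"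
  by (simp add: Sys_def wf_sys_def)

lemma Sys_Fn: "H \<in> Sys \<sigma> \<Longrightarrow> V \<in> En H \<Longrightarrow> Fn H V \<in> RanS \<sigma> (PA H V) \<rightarrow> Ran \<sigma> V"
  by (simp add: Sys_def wf_sys_def)

lemma map_of_map_pair: "map_of (map (\<lambda>v. (v, f v)) l) u = (if u \<in> set l then Some (f u) else None)"
  by (induction l) auto

lemma map_of_pairs: "finite A \<Longrightarrow> map_of (pairs A w) u = (if u \<in> A then Some (w u) else None)"
  unfolding pairs_def by (simp add: map_of_map_pair set_lst)

lemma fst_pairs: "finite A \<Longrightarrow> fst ` set (pairs A w) = A"
  unfolding pairs_def by (force simp: set_lst)

lemma consistent_pairs: "consistent (pairs A w)"
  unfolding pairs_def consistent_def by auto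

lemma consistent_pairs_app: "A \<inter> B = {} \<Longrightarrow> finite A \<Longrightarrow> finite B \<Longrightarrow> consistent (pairs A w @ pairs B p)"
  unfolding pairs_def consistent_def by (auto simp: set_lst)

lemma int_asg_total:
  assumes "\<And>u. u \<in> En H \<Longrightarrow> u \<notin> fst ` set xs \<Longrightarrow> PA H u \<subseteq> fst ` set xs"
  shows "int_asg xs H s = (\<lambda>u. if u \<in> fst ` set xs then the (map_of xs u) else
           if u \<in> En H then Fn H u (restrict (\<lambda>v. the (map_of xs v)) (PA H u)) else s u)"
    (is "_ = ?t")
proof -
  let ?D = "fst ` set xs" 
  let ?m = "\<lambda>v. the (map_of xs v)"
  have restr: "restrict t (PA H u) = restrict ?m (PA H u)"
    if "u \<in> En H" "u \<notin> ?D" "\<forall>v\<in>?D. t v = ?m v" for t u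
    using assms[OF that(1,2)] that(3) unfolding restrict_def by (intro ext) auto
  show ?thesis unfolding int_asg_def
  proof (rule the_equality)
    have tD: "\<forall>v\<in>?D. ?t v = ?m v" by simp
    show "\<forall>V. (V \<in> ?D \<longrightarrow> ?t V = the (map_of xs V)) \<and>
        (V \<notin> ?D \<and> V \<notin> En H \<longrightarrow> ?t V = s V) \<and>
        (V \<notin> ?D \<and> V \<in> En H \<longrightarrow> ?t V = Fn H V (restrict ?t (PA H V)))"
    proof (intro allI conjI impI)
      fix V assume V: "V \<notin> ?D \<and> V \<in> En H"
      have "restrict ?t (PA H V) = restrict ?m (PA H V)" using restr[OF _ _ tD] V by blast
      then show "?t V = Fn H V (restrict ?t (PA H V))" using V by simp
    qed auto
  next
    fix t
    assume A: "\<forall>V. (V \<in> ?D \<longrightarrow> t V = the (map_of xs V)) \<and>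
        (V \<notin> ?D \<and> V \<notin> En H \<longrightarrow> t V = s V) \<and>
        (V \<notin> ?D \<and> V \<in> En H \<longrightarrow> t V = Fn H V (restrict t (PA H V)))"
    then have tD: "\<forall>v\<in>?D. t v = ?m v" by simp
    show "t = ?t"
    proof
      fix u
      show "t u = ?t u"
      proof (cases "u \<in> ?D")
        case True then have "t u = ?m u" using tD by blast
        then show ?thesis using True by simp
      next
        case False
        show ?thesis
        proof (cases "u \<in> En H")
          case True
          have "t u = Fn H u (restrict t (PA H u))" using A False True by blast
          also have "\<dots> = Fn H u (restrict ?m (PA H u))" using restr[OF True False tD] by simp
          finally show ?thesis using False True by simp
        next
          case F2: False
          have "t u = s u" using A False F2 by blast
          then show ?thesis using False F2 by simp
        qed
      qed
    qed
  qed
qed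

definition valI :: "('v,'a) sysf \<Rightarrow> ('v \<Rightarrow> 'a) \<Rightarrow> ('v \<Rightarrow> 'a) \<Rightarrow> 'v \<Rightarrow> 'a" where
  "valI H s m V = (if V \<in> En H then Fn H V (restrict m (PA H V)) else s V)"

lemma int_tot:
  assumes "H \<in> Sys \<sigma>" "fst ` set xs = Dom \<sigma> - {V}"
  shows "int_asg xs H s V = valI H s (\<lambda>u. the (map_of xs u)) V"
proof -
  have "PA H u \<subseteq> fst ` set xs" if "u \<in> En H" "u \<notin> fst ` set xs" for u
    using Sys_En[OF assms(1)] Sys_PA[OF assms(1) that(1)] that assms(2) by auto
  then have eq: "int_asg xs H s = (\<lambda>u. if u \<in> fst ` set xs then the (map_of xs u) else
           if u \<in> En H then Fn H u (restrict (\<lambda>v. the (map_of xs v)) (PA H u)) else s u)"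
    by (rule int_asg_total)
  show ?thesis using assms(2) by (simp add: eq valI_def)
qed

lemma valI_cong: "(\<And>u. u \<in> PA H V \<Longrightarrow> m u = m' u) \<Longrightarrow> valI H s m V = valI H s m' V"
proof -
  assume "\<And>u. u \<in> PA H V \<Longrightarrow> m u = m' u"
  then have "restrict m (PA H V) = restrict m' (PA H V)" unfolding restrict_def by (intro ext) auto
  then show ?thesis unfolding valI_def by simp
qed

lemma restrict_RanS: "(\<And>u. u \<in> A \<Longrightarrow> m u \<in> Ran \<sigma> u) \<Longrightarrow> restrict m A \<in> RanS \<sigma> A"
  unfolding RanS_def by (simp only: restrict_PiE_iff) blast

lemma RanS_restrict: "p \<in> RanS \<sigma> A \<Longrightarrow> restrict p A = p"
  unfolding RanS_def by (rule extensional_restrict) (erule PiE_iff[THEN iffD1, THEN conjunct2])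

lemma RanS_mem: "p \<in> RanS \<sigma> A \<Longrightarrow> u \<in> A \<Longrightarrow> p u \<in> Ran \<sigma> u"
  unfolding RanS_def by (rule PiE_mem)

lemma RanS_arb: "p \<in> RanS \<sigma> A \<Longrightarrow> u \<notin> A \<Longrightarrow> p u = undefined"
  unfolding RanS_def by (rule PiE_arb)

lemma join_restrict: "join (P \<inter> Q) (restrict m (P \<inter> Q)) (restrict m (P - Q)) = restrict m P"
proof
  fix u show "join (P \<inter> Q) (restrict m (P \<inter> Q)) (restrict m (P - Q)) u = restrict m P u"
    unfolding join_def restrict_def by (cases "u \<in> P"; cases "u \<in> Q") simp_all
qed

lemma fsim_iff: "fsim \<sigma> F G V \<longleftrightarrow> (\<forall>m. (\<forall>u\<in>PA F V \<union> PA G V. m u \<in> Ran \<sigma> u) \<longrightarrow>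
     Fn F V (restrict m (PA F V)) = Fn G V (restrict m (PA G V)))"
proof -
  let ?P = "PA F V" and ?Q = "PA G V"
  let ?I = "?P \<inter> ?Q"
  have fsD: "fsim \<sigma> F G V \<longleftrightarrow> (\<forall>x\<in>RanS \<sigma> ?I. \<forall>y\<in>RanS \<sigma> (?P - ?Q). \<forall>z\<in>RanS \<sigma> (?Q - ?P).
         Fn F V (join ?I x y) = Fn G V (join ?I x z))"
    unfolding fsim_def Let_def ..
  show ?thesis
  proof
    assume fs: "fsim \<sigma> F G V"
    show "\<forall>m. (\<forall>u\<in>?P \<union> ?Q. m u \<in> Ran \<sigma> u) \<longrightarrow> Fn F V (restrict m ?P) = Fn G V (restrict m ?Q)"
    proof (intro allI impI)
      fix m assume g: "\<forall>u\<in>?P \<union> ?Q. m u \<in> Ran \<sigma> u"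
      have x: "restrict m ?I \<in> RanS \<sigma> ?I" by (rule restrict_RanS) (use g in blast)
      have y: "restrict m (?P - ?Q) \<in> RanS \<sigma> (?P - ?Q)" by (rule restrict_RanS) (use g in blast)
      have z: "restrict m (?Q - ?P) \<in> RanS \<sigma> (?Q - ?P)" by (rule restrict_RanS) (use g in blast)
      have "Fn F V (join ?I (restrict m ?I) (restrict m (?P - ?Q))) =
            Fn G V (join ?I (restrict m ?I) (restrict m (?Q - ?P)))"
        using fs[unfolded fsD] x y z by (elim ballE) auto
      moreover have "join ?I (restrict m ?I) (restrict m (?P - ?Q)) = restrict m ?P"
        by (rule join_restrict)
      moreover have "?I = ?Q \<inter> ?P" by (rule Int_commute)
      then have "join ?I (restrict m ?I) (restrict m (?Q - ?P)) = restrict m ?Q"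
        using join_restrict[of ?Q ?P m] by simp
      ultimately show "Fn F V (restrict m ?P) = Fn G V (restrict m ?Q)" by simp
    qed
  next
    assume H: "\<forall>m. (\<forall>u\<in>?P \<union> ?Q. m u \<in> Ran \<sigma> u) \<longrightarrow> Fn F V (restrict m ?P) = Fn G V (restrict m ?Q)"
    show "fsim \<sigma> F G V"
      unfolding fsD
    proof (intro ballI)
      fix x y z assume x: "x \<in> RanS \<sigma> ?I" and y: "y \<in> RanS \<sigma> (?P - ?Q)" and z: "z \<in> RanS \<sigma> (?Q - ?P)"
      define m where "m = (\<lambda>u. if u \<in> ?I then x u else if u \<in> ?P - ?Q then y u else z u)"
      have "\<forall>u\<in>?P \<union> ?Q. m u \<in> Ran \<sigma> u"
      proof
        fix u assume "u \<in> ?P \<union> ?Q"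
        then show "m u \<in> Ran \<sigma> u"
          using RanS_mem[OF x, of u] RanS_mem[OF y, of u] RanS_mem[OF z, of u] unfolding m_def
          by (cases "u \<in> ?P"; cases "u \<in> ?Q") simp_all
      qed
      then have "Fn F V (restrict m ?P) = Fn G V (restrict m ?Q)" using H by blast
      moreover have "restrict m ?P = join ?I x y"
      proof
        fix u show "restrict m ?P u = join ?I x y u"
          using RanS_arb[OF y, of u] unfolding m_def join_def restrict_def
          by (cases "u \<in> ?P"; cases "u \<in> ?Q") simp_all
      qed
      moreover have "restrict m ?Q = join ?I x z"
      proof
        fix u show "restrict m ?Q u = join ?I x z u"
          using RanS_arb[OF z, of u] unfolding m_def join_def restrict_def
          by (cases "u \<in> ?P"; cases "u \<in> ?Q") simp_all
      qed
      ultimately show "Fn F V (join ?I x y) = Fn G V (join ?I x z)" by simp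
    qed
  qed
qed

lemma extend_good:
  assumes "wf_sig \<sigma>" "A \<subseteq> Dom \<sigma>" "\<And>u. u \<in> A \<Longrightarrow> m u \<in> Ran \<sigma> u"
  shows "\<exists>m'. (\<forall>u\<in>Dom \<sigma>. m' u \<in> Ran \<sigma> u) \<and> (\<forall>u\<in>A. m' u = m u)"
proof -
  define m' where "m' = (\<lambda>u. if u \<in> A then m u else SOME v. v \<in> Ran \<sigma> u)"
  have "\<forall>u\<in>Dom \<sigma>. m' u \<in> Ran \<sigma> u"
  proof
    fix u assume u: "u \<in> Dom \<sigma>"
    show "m' u \<in> Ran \<sigma> u"
    proof (cases "u \<in> A")
      case True then show ?thesis using assms(3) unfolding m'_def by simp
    next
      case False
      have "Ran \<sigma> u \<noteq> {}" using assms(1) u by (simp add: wf_sig_def)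
      then have "\<exists>v. v \<in> Ran \<sigma> u" by blast
      then have "(SOME v. v \<in> Ran \<sigma> u) \<in> Ran \<sigma> u" by (rule someI_ex)
      then show ?thesis using False unfolding m'_def by simp
    qed
  qed
  moreover have "\<forall>u\<in>A. m' u = m u" unfolding m'_def by simp
  ultimately show ?thesis by blast
qed

lemma fsim_refl: "fsim \<sigma> F F V"
  by (simp add: fsim_iff)

lemma fsim_sym: "fsim \<sigma> F G V \<Longrightarrow> fsim \<sigma> G F V"
proof -
  assume A: "fsim \<sigma> F G V"
  have I: "PA G V \<inter> PA F V = PA F V \<inter> PA G V" by (rule Int_commute)
  show ?thesis unfolding fsim_def Let_def I
  proof (intro ballI)
    fix x y z
    assume "x \<in> RanS \<sigma> (PA F V \<inter> PA G V)" "y \<in> RanS \<sigma> (PA G V - PA F V)" "z \<in> RanS \<sigma> (PA F V - PA G V)"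
    then have "Fn F V (join (PA F V \<inter> PA G V) x z) = Fn G V (join (PA F V \<inter> PA G V) x y)"
      using A unfolding fsim_def Let_def by blast
    then show "Fn G V (join (PA F V \<inter> PA G V) x y) = Fn F V (join (PA F V \<inter> PA G V) x z)"
      by (rule sym)
  qed
qed

lemma fsim_trans:
  assumes "wf_sig \<sigma>" "PA F V \<subseteq> Dom \<sigma>" "PA G V \<subseteq> Dom \<sigma>" "PA H V \<subseteq> Dom \<sigma>"
    and "fsim \<sigma> F G V" "fsim \<sigma> G H V"
  shows "fsim \<sigma> F H V"
  unfolding fsim_iff
proof (intro allI impI)
  fix m assume g: "\<forall>u\<in>PA F V \<union> PA H V. m u \<in> Ran \<sigma> u"
  obtain m' where m': "\<forall>u\<in>Dom \<sigma>. m' u \<in> Ran \<sigma> u" "\<forall>u\<in>PA F V \<union> PA H V. m' u = m u"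
    using extend_good[OF assms(1), of "PA F V \<union> PA H V" m] g assms(2,4) by auto
  have "Fn F V (restrict m (PA F V)) = Fn F V (restrict m' (PA F V))"
    using m'(2) unfolding restrict_def by (intro arg_cong[where f="Fn F V"] ext) auto
  also have "\<dots> = Fn G V (restrict m' (PA G V))"
    using assms(5) m'(1) assms(2,3) unfolding fsim_iff by blast
  also have "\<dots> = Fn H V (restrict m' (PA H V))"
    using assms(6) m'(1) assms(3,4) unfolding fsim_iff by blast
  also have "\<dots> = Fn H V (restrict m (PA H V))"
    using m'(2) unfolding restrict_def by (intro arg_cong[where f="Fn H V"] ext) auto
  finally show "Fn F V (restrict m (PA F V)) = Fn H V (restrict m (PA H V))" .
qed

lemma ssim_refl: "ssim \<sigma> F F"
  by (simp add: ssim_def fsim_refl)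

lemma ssim_sym: "ssim \<sigma> F G \<Longrightarrow> ssim \<sigma> G F"
  unfolding ssim_def by (auto intro: fsim_sym)

lemma ssim_trans:
  assumes "wf_sig \<sigma>" "F \<in> Sys \<sigma>" "G \<in> Sys \<sigma>" "H \<in> Sys \<sigma>" "ssim \<sigma> F G" "ssim \<sigma> G H"
  shows "ssim \<sigma> F H"
  unfolding ssim_def
proof
  show "En F - Cn \<sigma> F = En H - Cn \<sigma> H" using assms(5,6) by (simp add: ssim_def)
  show "\<forall>V\<in>En F - Cn \<sigma> F. fsim \<sigma> F H V"
  proof
    fix V assume V: "V \<in> En F - Cn \<sigma> F"
    then have "V \<in> En G - Cn \<sigma> G" "V \<in> En H - Cn \<sigma> H" using assms(5,6) by (auto simp: ssim_def)
    then have p: "PA F V \<subseteq> Dom \<sigma>" "PA G V \<subseteq> Dom \<sigma>" "PA H V \<subseteq> Dom \<sigma>"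
      using V Sys_PA[OF assms(2), of V] Sys_PA[OF assms(3), of V] Sys_PA[OF assms(4), of V] by auto
    have "fsim \<sigma> F G V" using assms(5) V by (simp add: ssim_def)
    moreover have "fsim \<sigma> G H V" using assms(6) \<open>V \<in> En G - Cn \<sigma> G\<close> by (simp add: ssim_def)
    ultimately show "fsim \<sigma> F H V" by (rule fsim_trans[OF assms(1) p])
  qed
qed



context
  fixes \<sigma> :: "('v,'a) sig"
  assumes wf: "wf_sig \<sigma>"
begin

lemma fin_Dom: "finite (Dom \<sigma>)"
  using wf by (simp add: wf_sig_def)

lemma fin_RanS: "A \<subseteq> Dom \<sigma> \<Longrightarrow> finite (RanS \<sigma> A)"
  unfolding RanS_def using wf fin_Dom
  by (intro finite_PiE) (auto simp: wf_sig_def intro: finite_subset)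

lemma fin_Ran: "V \<in> Dom \<sigma> \<Longrightarrow> finite (Ran \<sigma> V)"
  using wf by (simp add: wf_sig_def)

lemma fin_Asg: "finite (Asg \<sigma>)"
  unfolding Asg_def by (rule fin_RanS) simp

lemma Asg_mem: "s \<in> Asg \<sigma> \<Longrightarrow> u \<in> Dom \<sigma> \<Longrightarrow> s u \<in> Ran \<sigma> u"
  unfolding Asg_def by (rule RanS_mem)

lemma Asg_ext: "s \<in> Asg \<sigma> \<Longrightarrow> t \<in> Asg \<sigma> \<Longrightarrow> (\<And>u. u \<in> Dom \<sigma> \<Longrightarrow> s u = t u) \<Longrightarrow> s = t"
  unfolding Asg_def RanS_def by (rule PiE_ext)

lemma PA_sub: "H \<in> Sys \<sigma> \<Longrightarrow> PA H V \<subseteq> Dom \<sigma> - {V}"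
  by (cases "V \<in> En H") (simp_all add: Sys_def wf_sys_def)

lemma valI_cong2:
  assumes "H \<in> Sys \<sigma>" "\<And>u. u \<in> Dom \<sigma> - {V} \<Longrightarrow> m u = m' u"
  shows "valI H s m V = valI H s m' V"
proof (cases "V \<in> En H")
  case True
  then have "PA H V \<subseteq> Dom \<sigma> - {V}" using Sys_PA[OF assms(1)] by blast
  then show ?thesis using assms(2) by (intro valI_cong) blast
next
  case False then show ?thesis by (simp add: valI_def)
qed

lemma valI_N: "V \<in> En H \<Longrightarrow> valI H s m V = Fn H V (restrict m (PA H V))"
  by (simp add: valI_def)

lemma val_nonN:
  assumes "H \<in> Sys \<sigma>" "s \<in> Asg \<sigma>" "compatible s H" "V \<notin> En H - Cn \<sigma> H"
    and "\<And>u. u \<in> PA H V \<Longrightarrow> m u \<in> Ran \<sigma> u"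
  shows "valI H s m V = s V"
proof (cases "V \<in> En H")
  case False then show ?thesis by (simp add: valI_def)
next
  case True
  then have C: "V \<in> Cn \<sigma> H" using assms(4) by blast
  have PA: "PA H V \<subseteq> Dom \<sigma>" using Sys_PA[OF assms(1) True] by blast
  have p: "restrict m (PA H V) \<in> RanS \<sigma> (PA H V)" using assms(5) by (rule restrict_RanS)
  have q: "restrict s (PA H V) \<in> RanS \<sigma> (PA H V)"
    by (rule restrict_RanS) (use PA Asg_mem[OF assms(2)] in blast)
  have "Fn H V (restrict m (PA H V)) = Fn H V (restrict s (PA H V))"
    using C p q unfolding Cn_def by blast
  also have "\<dots> = s V" using assms(3) True unfolding compatible_def by simp
  finally show ?thesis using True by (simp add: valI_def)
qed

lemma valI_sim:
  assumes "H1 \<in> Sys \<sigma>" "H2 \<in> Sys \<sigma>" "ssim \<sigma> H1 H2" "t \<in> Asg \<sigma>" "compatible t H1" "compatible t H2"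
    and "\<And>u. u \<in> Dom \<sigma> - {V} \<Longrightarrow> m u \<in> Ran \<sigma> u"
  shows "valI H1 t m V = valI H2 t m V"
proof (cases "V \<in> En H1 - Cn \<sigma> H1")
  case True
  then have V2: "V \<in> En H2 - Cn \<sigma> H2" and fs: "fsim \<sigma> H1 H2 V"
    using assms(3) unfolding ssim_def by auto
  have "PA H1 V \<union> PA H2 V \<subseteq> Dom \<sigma> - {V}"
    using Sys_PA[OF assms(1), of V] Sys_PA[OF assms(2), of V] True V2 by blast
  then have "\<forall>u\<in>PA H1 V \<union> PA H2 V. m u \<in> Ran \<sigma> u" using assms(7) by blast
  then have "Fn H1 V (restrict m (PA H1 V)) = Fn H2 V (restrict m (PA H2 V))"
    using fs unfolding fsim_iff by blast
  then show ?thesis using True V2 by (simp add: valI_def)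
next
  case False
  then have V2: "V \<notin> En H2 - Cn \<sigma> H2" using assms(3) unfolding ssim_def by auto
  have a: "valI H1 t m V = t V"
    by (rule val_nonN[OF assms(1,4,5) False]) (use PA_sub[OF assms(1), of V] assms(7) in blast)
  have b: "valI H2 t m V = t V"
    by (rule val_nonN[OF assms(2,4,6) V2]) (use PA_sub[OF assms(2), of V] assms(7) in blast)
  show ?thesis using a b by simp
qed

lemma Cn_intro:
  assumes "H \<in> Sys \<sigma>" "V \<in> En H"
    and "\<And>m. (\<forall>u\<in>Dom \<sigma>. m u \<in> Ran \<sigma> u) \<Longrightarrow> Fn H V (restrict m (PA H V)) = c"
  shows "V \<in> Cn \<sigma> H"
proof -
  have PA: "PA H V \<subseteq> Dom \<sigma>" using Sys_PA[OF assms(1,2)] by blast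
  have c: "Fn H V p = c" if p: "p \<in> RanS \<sigma> (PA H V)" for p
  proof -
    obtain m' where m': "\<forall>u\<in>Dom \<sigma>. m' u \<in> Ran \<sigma> u" "\<forall>u\<in>PA H V. m' u = p u"
      using extend_good[OF wf PA, of p] RanS_mem[OF p] by blast
    have "restrict m' (PA H V) = restrict p (PA H V)"
      using m'(2) unfolding restrict_def by (intro ext) simp
    also have "\<dots> = p" by (rule RanS_restrict[OF p])
    finally show ?thesis using assms(3)[OF m'(1)] by simp
  qed
  show ?thesis unfolding Cn_def using assms(2) c by simp
qed

lemma sim_from_vals:
  assumes F: "F \<in> Sys \<sigma>" and H: "H \<in> Sys \<sigma>" and s: "s \<in> Asg \<sigma>" and cF: "compatible s F"
    and E: "\<And>V m. V \<in> Dom \<sigma> \<Longrightarrow> (\<forall>u\<in>Dom \<sigma>. m u \<in> Ran \<sigma> u) \<Longrightarrow>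
        valI F s m V = (if V \<in> En H - Cn \<sigma> H then Fn H V (restrict m (PA H V)) else s V)"
  shows "ssim \<sigma> F H"
proof -
  have sub1: "En F - Cn \<sigma> F \<subseteq> En H - Cn \<sigma> H"
  proof
    fix V assume V: "V \<in> En F - Cn \<sigma> F"
    have VD: "V \<in> Dom \<sigma>" using V Sys_En[OF F] by blast
    show "V \<in> En H - Cn \<sigma> H"
    proof (rule ccontr)
      assume N: "V \<notin> En H - Cn \<sigma> H"
      have "V \<in> Cn \<sigma> F"
      proof (rule Cn_intro[OF F])
        show "V \<in> En F" using V by blast
        fix m assume g: "\<forall>u\<in>Dom \<sigma>. m u \<in> Ran \<sigma> u"
        have "Fn F V (restrict m (PA F V)) = valI F s m V" using V by (simp add: valI_def)
        also have "\<dots> = (if V \<in> En H - Cn \<sigma> H then Fn H V (restrict m (PA H V)) else s V)"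
          by (rule E[OF VD g])
        also have "\<dots> = s V" by (rule if_not_P[OF N])
        finally show "Fn F V (restrict m (PA F V)) = s V" .
      qed
      then show False using V by blast
    qed
  qed
  have sub2: "En H - Cn \<sigma> H \<subseteq> En F - Cn \<sigma> F"
  proof
    fix V assume V: "V \<in> En H - Cn \<sigma> H"
    have VD: "V \<in> Dom \<sigma>" using V Sys_En[OF H] by blast
    show "V \<in> En F - Cn \<sigma> F"
    proof (rule ccontr)
      assume N: "V \<notin> En F - Cn \<sigma> F"
      have "V \<in> Cn \<sigma> H"
      proof (rule Cn_intro[OF H])
        show "V \<in> En H" using V by blast
        fix m assume g: "\<forall>u\<in>Dom \<sigma>. m u \<in> Ran \<sigma> u"
        have "valI F s m V = s V"
          by (rule val_nonN[OF F s cF N]) (use g PA_sub[OF F, of V] in blast)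
        then show "Fn H V (restrict m (PA H V)) = s V" using E[OF VD g] V by simp
      qed
      then show False using V by blast
    qed
  qed
  have fs: "fsim \<sigma> F H V" if V: "V \<in> En F - Cn \<sigma> F" for V
    unfolding fsim_iff
  proof (intro allI impI)
    fix m assume g: "\<forall>u\<in>PA F V \<union> PA H V. m u \<in> Ran \<sigma> u"
    have VD: "V \<in> Dom \<sigma>" using V Sys_En[OF F] by blast
    have VH: "V \<in> En H - Cn \<sigma> H" using V sub1 by blast
    have PA: "PA F V \<union> PA H V \<subseteq> Dom \<sigma>" using V VH Sys_PA[OF F, of V] Sys_PA[OF H, of V] by blast
    obtain m' where m': "\<forall>u\<in>Dom \<sigma>. m' u \<in> Ran \<sigma> u" "\<forall>u\<in>PA F V \<union> PA H V. m' u = m u"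
      using extend_good[OF wf PA, of m] g by blast
    have r1: "restrict m' (PA F V) = restrict m (PA F V)"
      using m'(2) unfolding restrict_def by (intro ext) simp
    have r2: "restrict m' (PA H V) = restrict m (PA H V)"
      using m'(2) unfolding restrict_def by (intro ext) simp
    have "valI F s m' V = Fn H V (restrict m' (PA H V))" using E[OF VD m'(1)] VH by simp
    moreover have "valI F s m' V = Fn F V (restrict m' (PA F V))" using V by (simp add: valI_def)
    ultimately show "Fn F V (restrict m (PA F V)) = Fn H V (restrict m (PA H V))" using r1 r2 by simp
  qed
  show ?thesis unfolding ssim_def using sub1 sub2 fs by blast
qed

end



lemma gsat_Cf_Eq: "gsat T (Cf xs (Eq V a)) \<longleftrightarrow> (\<not> consistent xs \<or> (\<forall>p\<in>T. int_asg xs (snd p) (fst p) V = a))"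
  by (auto simp: int_team_def)

lemma ball2_split: "(\<forall>(s,F)\<in>T. \<forall>(s',F')\<in>T. f F s = f F' s') \<longleftrightarrow> (\<forall>p\<in>T. \<forall>q\<in>T. f (snd p) (fst p) = f (snd q) (fst q))"
  by (simp add: split_beta)

lemma ball1_split: "(\<forall>(s,F)\<in>T. g F s = a) \<longleftrightarrow> (\<forall>p\<in>T. g (snd p) (fst p) = a)"
  by (simp add: split_beta)

lemma gsat_Cf_Dep0: "gsat T (Cf xs (Dep V)) \<longleftrightarrow> (\<not> consistent xs \<or>
    (\<forall>(s,F)\<in>T. \<forall>(s',F')\<in>T. int_asg xs F s V = int_asg xs F' s' V))"
  by (auto simp: int_team_def)

lemma gsat_Cf_Dep: "gsat T (Cf xs (Dep V)) \<longleftrightarrow> (\<not> consistent xs \<or>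
    (\<forall>p\<in>T. \<forall>q\<in>T. int_asg xs (snd p) (fst p) V = int_asg xs (snd q) (fst q) V))"
  unfolding gsat_Cf_Dep0 ball2_split[where f="\<lambda>F s. int_asg xs F s V"] ..

lemma the_map_pairs: "finite A \<Longrightarrow> u \<in> A \<Longrightarrow> the (map_of (pairs A w) u) = w u"
  by (simp add: map_of_pairs)

lemma the_map_pairs_app:
  assumes "finite A" "finite B" "u \<in> A \<union> B"
  shows "the (map_of (pairs A w @ pairs B p) u) = join A w p u"
proof (cases "u \<in> A")
  case True
  then show ?thesis using assms by (simp add: map_of_pairs map_add_def join_def)
next
  case False
  then have "u \<in> B" using assms(3) by blast
  then show ?thesis using assms False by (simp add: map_of_pairs map_add_def join_def)
qed

context
  fixes \<sigma> :: "('v,'a) sig"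
  assumes wf: "wf_sig \<sigma>"
begin

lemma tot_pairs:
  assumes "H \<in> Sys \<sigma>"
  shows "int_asg (pairs (Dom \<sigma> - {V}) w) H s V = valI H s w V"
proof -
  have fin: "finite (Dom \<sigma> - {V})" using fin_Dom[OF wf] by simp
  have "int_asg (pairs (Dom \<sigma> - {V}) w) H s V = valI H s (\<lambda>u. the (map_of (pairs (Dom \<sigma> - {V}) w) u)) V"
    by (rule int_tot[OF assms]) (rule fst_pairs[OF fin])
  also have "\<dots> = valI H s w V"
    by (rule valI_cong2[OF wf assms]) (rule the_map_pairs[OF fin])
  finally show ?thesis .
qed

lemma tot_eta:
  assumes "H' \<in> Sys \<sigma>" "H \<in> Sys \<sigma>"
  shows "int_asg (pairs (Dom \<sigma> - (PA H V \<union> {V})) w @ pairs (PA H V) p) H' s V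
       = valI H' s (join (Dom \<sigma> - (PA H V \<union> {V})) w p) V"
proof -
  let ?W = "Dom \<sigma> - (PA H V \<union> {V})"
  have PA: "PA H V \<subseteq> Dom \<sigma> - {V}" by (rule PA_sub[OF wf assms(2)])
  have finW: "finite ?W" using fin_Dom[OF wf] by simp
  have finP: "finite (PA H V)" using fin_Dom[OF wf] PA finite_subset by blast
  have D: "?W \<union> PA H V = Dom \<sigma> - {V}" using PA by blast
  have "int_asg (pairs ?W w @ pairs (PA H V) p) H' s V
      = valI H' s (\<lambda>u. the (map_of (pairs ?W w @ pairs (PA H V) p) u)) V"
    by (rule int_tot[OF assms(1)]) (simp only: set_append image_Un fst_pairs[OF finW] fst_pairs[OF finP] D)
  also have "\<dots> = valI H' s (join ?W w p) V"
    by (rule valI_cong2[OF wf assms(1)]) (rule the_map_pairs_app[OF finW finP], use D in blast)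
  finally show ?thesis .
qed

lemma gsat_chi: "gsat T (chi \<sigma>) \<longleftrightarrow>
   (\<forall>V\<in>Dom \<sigma>. \<forall>w\<in>RanS \<sigma> (Dom \<sigma> - {V}). gsat T (Cf (pairs (Dom \<sigma> - {V}) w) (Dep V))) \<and>
   (\<forall>V\<in>Dom \<sigma>. gsat T (Dep V))"
  unfolding chi_def gsat.simps(4) gsat_BigAnd
  by (simp add: set_lst fin_Dom[OF wf] fin_RanS[OF wf])

lemma chi_sat:
  assumes T: "T \<subseteq> SPairs \<sigma>" and t: "\<forall>p\<in>T. fst p = t"
    and sim: "\<forall>p\<in>T. \<forall>q\<in>T. ssim \<sigma> (snd p) (snd q)"
  shows "gsat T (chi \<sigma>)"
  unfolding gsat_chi[OF]
proof (intro conjI ballI)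
  fix V assume V: "V \<in> Dom \<sigma>"
  have "\<And>a b. (a,b) \<in> T \<Longrightarrow> a = t" using t by force
  then show "gsat T (Dep V)" by auto
next
  fix V w assume V: "V \<in> Dom \<sigma>" and w: "w \<in> RanS \<sigma> (Dom \<sigma> - {V})"
  have "int_asg (pairs (Dom \<sigma> - {V}) w) (snd p) (fst p) V = int_asg (pairs (Dom \<sigma> - {V}) w) (snd q) (fst q) V"
    if pq: "p \<in> T" "q \<in> T" for p q
  proof -
    obtain s F s' F' where pp: "p = (s,F)" "q = (s',F')" by fastforce
    then have p: "(s,F) \<in> T" "(s',F') \<in> T" using pq by auto
    have a: "s \<in> Asg \<sigma>" "F \<in> Sys \<sigma>" "compatible s F" using p T by (auto simp: SPairs_def)
    have b: "s' \<in> Asg \<sigma>" "F' \<in> Sys \<sigma>" "compatible s' F'" using p T by (auto simp: SPairs_def)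
    have st: "s = t" "s' = t" using p t by force+
    have sm: "ssim \<sigma> F F'" using sim pq pp by force
    have "valI F t w V = valI F' t w V"
      by (rule valI_sim[OF wf a(2) b(2) sm]) (use a b st RanS_mem[OF w] in auto)
    then show ?thesis using tot_pairs a(2) b(2) st pp by simp
  qed
  then show "gsat T (Cf (pairs (Dom \<sigma> - {V}) w) (Dep V))"
    unfolding gsat_Cf_Dep by blast
qed

lemma chi_fail:
  assumes sF: "(s,F) \<in> SPairs \<sigma>" and tG: "(t,G) \<in> SPairs \<sigma>"
    and c: "gsat {(s,F),(t,G)} (chi \<sigma>)"
  shows "ssim \<sigma> F G"
proof -
  have a: "s \<in> Asg \<sigma>" "F \<in> Sys \<sigma>" "compatible s F" using sF by (auto simp: SPairs_def)
  have b: "t \<in> Asg \<sigma>" "G \<in> Sys \<sigma>" "compatible t G" using tG by (auto simp: SPairs_def)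
  have C: "(\<forall>V\<in>Dom \<sigma>. \<forall>w\<in>RanS \<sigma> (Dom \<sigma> - {V}). gsat {(s,F),(t,G)} (Cf (pairs (Dom \<sigma> - {V}) w) (Dep V))) \<and>
     (\<forall>V\<in>Dom \<sigma>. gsat {(s,F),(t,G)} (Dep V))" using c unfolding gsat_chi .
  note C1 = conjunct1[OF C] and C2 = conjunct2[OF C]
  have "s = t"
  proof (rule Asg_ext[OF wf a(1) b(1)])
    fix u assume "u \<in> Dom \<sigma>" then have "gsat {(s,F),(t,G)} (Dep u)" using C2 by (rule bspec[rotated])
    then show "s u = t u" unfolding gsat.simps by blast
  qed
  then have ct: "compatible s G" using b by simp
  show ?thesis
  proof (rule sim_from_vals[OF wf a(2) b(2) a(1) a(3)])
    fix V m assume V: "V \<in> Dom \<sigma>" and g: "\<forall>u\<in>Dom \<sigma>. m u \<in> Ran \<sigma> u"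
    let ?w = "restrict m (Dom \<sigma> - {V})"
    have w: "?w \<in> RanS \<sigma> (Dom \<sigma> - {V})" by (rule restrict_RanS) (use g in blast)
    have "int_asg (pairs (Dom \<sigma> - {V}) ?w) F s V = int_asg (pairs (Dom \<sigma> - {V}) ?w) G t V"
    proof -
      have "gsat {(s,F),(t,G)} (Cf (pairs (Dom \<sigma> - {V}) ?w) (Dep V))" by (rule bspec[OF bspec[OF C1 V] w])
      then have "\<forall>p\<in>{(s,F),(t,G)}. \<forall>q\<in>{(s,F),(t,G)}. int_asg (pairs (Dom \<sigma> - {V}) ?w) (snd p) (fst p) V
          = int_asg (pairs (Dom \<sigma> - {V}) ?w) (snd q) (fst q) V"
        using consistent_pairs[of "Dom \<sigma> - {V}" ?w] unfolding gsat_Cf_Dep by blast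
      from bspec[OF bspec[OF this insertI1] insertI2[OF singletonI]] show ?thesis by simp
    qed
    then have e: "valI F s ?w V = valI G s ?w V"
      unfolding tot_pairs[OF a(2)] tot_pairs[OF b(2)] \<open>s = t\<close> .
    have "valI F s m V = valI F s ?w V" by (rule valI_cong2[OF wf a(2)]) simp
    also have "\<dots> = valI G s ?w V" by (rule e)
    also have "\<dots> = valI G s m V" by (rule valI_cong2[OF wf b(2)]) simp
    also have "\<dots> = (if V \<in> En G - Cn \<sigma> G then Fn G V (restrict m (PA G V)) else s V)"
    proof (cases "V \<in> En G - Cn \<sigma> G")
      case True then show ?thesis by (simp add: valI_def)
    next
      case False
      have "valI G s m V = s V"
        by (rule val_nonN[OF wf b(2) a(1) ct False]) (use g PA_sub[OF wf b(2), of V] in blast)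
      then show ?thesis by (simp only: if_not_P[OF False])
    qed
    finally show "valI F s m V = (if V \<in> En G - Cn \<sigma> G then Fn G V (restrict m (PA G V)) else s V)" .
  qed
qed

end



lemma gsat_Eq_alt: "gsat T (Eq X x) \<longleftrightarrow> (\<forall>p\<in>T. fst p X = x)"
  by (simp add: split_beta)

lemma gsat_BigAnd_Eq: "gsat T (BigAnd (map (\<lambda>V. Eq V (a V)) L)) \<longleftrightarrow> (\<forall>p\<in>T. \<forall>V\<in>set L. fst p V = a V)"
  by (auto simp del: gsat.simps simp add: gsat_BigAnd gsat_Eq_alt)

context
  fixes \<sigma> :: "('v,'a) sig"
  assumes wf: "wf_sig \<sigma>"
begin

lemma Theta_flat: "gsat T (BigAnd (map (\<lambda>V. Eq V (a V)) (lst (Dom \<sigma>)))) \<longleftrightarrow> (\<forall>p\<in>T. \<forall>V\<in>Dom \<sigma>. fst p V = a V)"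
  unfolding gsat_BigAnd_Eq set_lst[OF fin_Dom[OF wf]] ..

lemma Theta_sat:
  assumes A: "A \<subseteq> Asg \<sigma>" and T: "fst ` T \<subseteq> A"
  shows "gsat T (Theta \<sigma> A)"
proof -
  let ?f = "\<lambda>a. BigAnd (map (\<lambda>V. Eq V (a V)) (lst (Dom \<sigma>)))"
  have finA: "finite A" using A fin_Asg[OF wf] finite_subset by blast
  show ?thesis unfolding Theta_def
  proof (rule gsat_BigOr_intro)
    fix p assume p: "p \<in> T"
    then have "fst p \<in> set (lst A)" using T set_lst[OF finA] by blast
    then have "?f (fst p) \<in> set (map ?f (lst A))" by simp
    moreover have "gsat {p} (?f (fst p))" unfolding Theta_flat by simp
    ultimately show "\<exists>\<phi>\<in>set (map ?f (lst A)). gsat {p} \<phi>" by blast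
  next
    fix \<phi> T' assume "\<phi> \<in> set (map ?f (lst A))" and H: "\<And>p. p \<in> T' \<Longrightarrow> gsat {p} \<phi>"
    then obtain a where a: "\<phi> = ?f a" by auto
    show "gsat T' \<phi>" unfolding a Theta_flat
    proof
      fix p assume "p \<in> T'"
      from H[OF this] show "\<forall>V\<in>Dom \<sigma>. fst p V = a V" unfolding a Theta_flat by simp
    qed
  qed
qed

lemma Theta_elem:
  assumes A: "A \<subseteq> Asg \<sigma>" and s: "s \<in> Asg \<sigma>" and g: "gsat {(s,F)} (Theta \<sigma> A)"
  shows "s \<in> A"
proof -
  let ?f = "\<lambda>a. BigAnd (map (\<lambda>V. Eq V (a V)) (lst (Dom \<sigma>)))"
  have finA: "finite A" using A fin_Asg[OF wf] finite_subset by blast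
  obtain \<phi> where \<phi>: "\<phi> \<in> set (map ?f (lst A))" "gsat {(s,F)} \<phi>"
    using gsat_BigOr_elem[OF g[unfolded Theta_def]] by blast
  then obtain a where a: "a \<in> A" "\<phi> = ?f a" using set_lst[OF finA] by auto
  have "\<forall>V\<in>Dom \<sigma>. s V = a V" using \<phi>(2) unfolding a(2) Theta_flat by simp
  then have "s = a" using Asg_ext[OF wf s] a(1) A by blast
  then show ?thesis using a(1) by simp
qed

lemma gsat_Phi:
  assumes H: "H \<in> Sys \<sigma>"
  shows "gsat T (Phi \<sigma> H) \<longleftrightarrow> (\<forall>V\<in>En H - Cn \<sigma> H. gsat T (eta \<sigma> H V)) \<and>
     (\<forall>V\<in>Dom \<sigma> - (En H - Cn \<sigma> H). gsat T (xi \<sigma> V))"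
proof -
  have f1: "finite (En H - Cn \<sigma> H)" using Sys_En[OF H] fin_Dom[OF wf] finite_subset by blast
  have f2: "finite (Dom \<sigma> - (En H - Cn \<sigma> H))" using fin_Dom[OF wf] by simp
  show ?thesis unfolding Phi_def gsat.simps(4) gsat_BigAnd set_map set_lst[OF f1] set_lst[OF f2] by simp
qed

lemma gsat_eta:
  assumes H: "H \<in> Sys \<sigma>"
  shows "gsat T (eta \<sigma> H V) \<longleftrightarrow> (\<forall>w\<in>RanS \<sigma> (Dom \<sigma> - (PA H V \<union> {V})). \<forall>p\<in>RanS \<sigma> (PA H V).
     gsat T (Cf (pairs (Dom \<sigma> - (PA H V \<union> {V})) w @ pairs (PA H V) p) (Eq V (Fn H V p))))"
proof -
  have PA: "PA H V \<subseteq> Dom \<sigma>" using PA_sub[OF wf H, of V] by blast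
  have f1: "set (lst (RanS \<sigma> (Dom \<sigma> - (PA H V \<union> {V})))) = RanS \<sigma> (Dom \<sigma> - (PA H V \<union> {V}))"
    by (rule set_lst[OF fin_RanS[OF wf]]) blast
  have f2: "set (lst (RanS \<sigma> (PA H V))) = RanS \<sigma> (PA H V)"
    by (rule set_lst[OF fin_RanS[OF wf PA]])
  show ?thesis unfolding eta_def Let_def gsat_BigAnd by (simp add: f1[simplified] f2)
qed

lemma gsat_xi:
  assumes V: "V \<in> Dom \<sigma>"
  shows "gsat T (xi \<sigma> V) \<longleftrightarrow> (\<forall>v\<in>Ran \<sigma> V. \<forall>w\<in>RanS \<sigma> (Dom \<sigma> - {V}).
     gsat T (Imp (Eq V v) (Cf (pairs (Dom \<sigma> - {V}) w) (Eq V v))))"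
proof -
  have f1: "set (lst (RanS \<sigma> (Dom \<sigma> - {V}))) = RanS \<sigma> (Dom \<sigma> - {V})"
    by (rule set_lst[OF fin_RanS[OF wf]]) blast
  have f2: "set (lst (Ran \<sigma> V)) = Ran \<sigma> V" by (rule set_lst[OF fin_Ran[OF wf V]])
  show ?thesis unfolding xi_def Let_def gsat_BigAnd by (simp add: f1 f2)
qed

end



context
  fixes \<sigma> :: "('v,'a) sig"
  assumes wf: "wf_sig \<sigma>"
begin

lemma Phi_sim:
  assumes sF: "(s,F) \<in> SPairs \<sigma>" and H: "H \<in> Sys \<sigma>" and g: "gsat {(s,F)} (Phi \<sigma> H)"
  shows "ssim \<sigma> F H"
proof -
  have a: "s \<in> Asg \<sigma>" "F \<in> Sys \<sigma>" "compatible s F" using sF by (auto simp: SPairs_def)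
  have G: "(\<forall>V\<in>En H - Cn \<sigma> H. gsat {(s,F)} (eta \<sigma> H V)) \<and>
     (\<forall>V\<in>Dom \<sigma> - (En H - Cn \<sigma> H). gsat {(s,F)} (xi \<sigma> V))"
    using g unfolding gsat_Phi[OF wf H] .
  note GE = conjunct1[OF G] and GX = conjunct2[OF G]
  show ?thesis
  proof (rule sim_from_vals[OF wf a(2) H a(1) a(3)])
    fix V m assume V: "V \<in> Dom \<sigma>" and g: "\<forall>u\<in>Dom \<sigma>. m u \<in> Ran \<sigma> u"
    show "valI F s m V = (if V \<in> En H - Cn \<sigma> H then Fn H V (restrict m (PA H V)) else s V)"
    proof (cases "V \<in> En H - Cn \<sigma> H")
      case True
      let ?W = "Dom \<sigma> - (PA H V \<union> {V})"
      let ?w = "restrict m ?W" and ?p = "restrict m (PA H V)"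
      let ?xs = "pairs ?W ?w @ pairs (PA H V) ?p"
      have PA: "PA H V \<subseteq> Dom \<sigma> - {V}" by (rule PA_sub[OF wf H])
      have w: "?w \<in> RanS \<sigma> ?W" by (rule restrict_RanS) (use g in blast)
      have p: "?p \<in> RanS \<sigma> (PA H V)" by (rule restrict_RanS) (use g PA in blast)
      have e: "gsat {(s,F)} (eta \<sigma> H V)" by (rule bspec[OF GE True])
      have c: "gsat {(s,F)} (Cf ?xs (Eq V (Fn H V ?p)))"
        using bspec[OF bspec[OF e[unfolded gsat_eta[OF wf H]] w] p] .
      have finW: "finite ?W" using fin_Dom[OF wf] by simp
      have finP: "finite (PA H V)" using fin_Dom[OF wf] PA finite_subset by blast
      have cons: "consistent ?xs" by (rule consistent_pairs_app[OF _ finW finP]) blast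
      have "int_asg ?xs F s V = Fn H V ?p" using c cons unfolding gsat_Cf_Eq by simp
      then have "valI F s (join ?W ?w ?p) V = Fn H V ?p" unfolding tot_eta[OF wf a(2) H] .
      moreover have "valI F s m V = valI F s (join ?W ?w ?p) V"
        by (rule valI_cong2[OF wf a(2)]) (auto simp: join_def)
      ultimately show ?thesis using True by simp
    next
      case False
      let ?w = "restrict m (Dom \<sigma> - {V})"
      have w: "?w \<in> RanS \<sigma> (Dom \<sigma> - {V})" by (rule restrict_RanS) (use g in blast)
      have v: "s V \<in> Ran \<sigma> V" by (rule Asg_mem[OF wf a(1) V])
      have x: "gsat {(s,F)} (xi \<sigma> V)" using GX V False by blast
      have "gsat {(s,F)} (Imp (Eq V (s V)) (Cf (pairs (Dom \<sigma> - {V}) ?w) (Eq V (s V))))"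
        using bspec[OF bspec[OF x[unfolded gsat_xi[OF wf V]] v] w] .
      then have "gsat {(s,F)} (Cf (pairs (Dom \<sigma> - {V}) ?w) (Eq V (s V)))"
        unfolding Imp_def gsat_Or_single by simp
      then have "int_asg (pairs (Dom \<sigma> - {V}) ?w) F s V = s V"
        using consistent_pairs[of "Dom \<sigma> - {V}" ?w] unfolding gsat_Cf_Eq by simp
      then have "valI F s ?w V = s V" unfolding tot_pairs[OF wf a(2)] .
      moreover have "valI F s m V = valI F s ?w V" by (rule valI_cong2[OF wf a(2)]) simp
      ultimately show ?thesis by (simp only: if_not_P[OF False])
    qed
  qed
qed

lemma Phi_sat:
  assumes T: "T \<subseteq> SPairs \<sigma>" and fs: "\<forall>p\<in>T. fst p = s" and sim: "\<forall>p\<in>T. ssim \<sigma> (snd p) H"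
    and H: "H \<in> Sys \<sigma>"
  shows "gsat T (Phi \<sigma> H)"
  unfolding gsat_Phi[OF wf H]
proof (intro conjI ballI)
  fix V assume V: "V \<in> En H - Cn \<sigma> H"
  let ?W = "Dom \<sigma> - (PA H V \<union> {V})"
  have PA: "PA H V \<subseteq> Dom \<sigma> - {V}" by (rule PA_sub[OF wf H])
  have finW: "finite ?W" using fin_Dom[OF wf] by simp
  have finP: "finite (PA H V)" using fin_Dom[OF wf] PA finite_subset by blast
  show "gsat T (eta \<sigma> H V)" unfolding gsat_eta[OF wf H]
  proof (intro ballI)
    fix w p assume w: "w \<in> RanS \<sigma> ?W" and p: "p \<in> RanS \<sigma> (PA H V)"
    let ?xs = "pairs ?W w @ pairs (PA H V) p"
    let ?mm = "join ?W w p"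
    have cons: "consistent ?xs" by (rule consistent_pairs_app[OF _ finW finP]) blast
    have "int_asg ?xs (snd q) (fst q) V = Fn H V p" if q: "q \<in> T" for q
    proof -
      obtain s' H' where qq: "q = (s',H')" by fastforce
      have b: "s' \<in> Asg \<sigma>" "H' \<in> Sys \<sigma>" "compatible s' H'" using q qq T by (auto simp: SPairs_def)
      have sm: "ssim \<sigma> H' H" using sim q qq by auto
      have V': "V \<in> En H' - Cn \<sigma> H'" using sm V unfolding ssim_def by blast
      have fsm: "fsim \<sigma> H' H V" using sm V' unfolding ssim_def by blast
      have PA': "PA H' V \<subseteq> Dom \<sigma> - {V}" by (rule PA_sub[OF wf b(2)])
      have good: "\<forall>u\<in>PA H' V \<union> PA H V. ?mm u \<in> Ran \<sigma> u"
      proof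
        fix u assume u: "u \<in> PA H' V \<union> PA H V"
        show "?mm u \<in> Ran \<sigma> u"
        proof (cases "u \<in> ?W")
          case True then show ?thesis using RanS_mem[OF w True] by (simp add: join_def)
        next
          case False
          then have "u \<in> PA H V" using u PA PA' by blast
          then show ?thesis using RanS_mem[OF p] False by (simp add: join_def)
        qed
      qed
      have r: "restrict ?mm (PA H V) = p"
      proof
        fix u show "restrict ?mm (PA H V) u = p u"
          using RanS_arb[OF p, of u] by (auto simp: join_def restrict_def)
      qed
      have "int_asg ?xs H' s' V = valI H' s' ?mm V" by (rule tot_eta[OF wf b(2) H])
      also have "\<dots> = Fn H' V (restrict ?mm (PA H' V))" using V' by (simp add: valI_def)
      also have "\<dots> = Fn H V (restrict ?mm (PA H V))" using fsm good unfolding fsim_iff by blast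
      also have "\<dots> = Fn H V p" using r by simp
      finally show ?thesis using qq by simp
    qed
    then show "gsat T (Cf ?xs (Eq V (Fn H V p)))" unfolding gsat_Cf_Eq by blast
  qed
next
  fix V assume V: "V \<in> Dom \<sigma> - (En H - Cn \<sigma> H)"
  have VD: "V \<in> Dom \<sigma>" using V by blast
  show "gsat T (xi \<sigma> V)" unfolding gsat_xi[OF wf VD]
  proof (intro ballI)
    fix v w assume v: "v \<in> Ran \<sigma> V" and w: "w \<in> RanS \<sigma> (Dom \<sigma> - {V})"
    show "gsat T (Imp (Eq V v) (Cf (pairs (Dom \<sigma> - {V}) w) (Eq V v)))"
    proof (cases "s V = v")
      case True
      have "int_asg (pairs (Dom \<sigma> - {V}) w) (snd q) (fst q) V = v" if q: "q \<in> T" for q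
      proof -
        obtain s' H' where qq: "q = (s',H')" by fastforce
        have b: "s' \<in> Asg \<sigma>" "H' \<in> Sys \<sigma>" "compatible s' H'" using q qq T by (auto simp: SPairs_def)
        have sm: "ssim \<sigma> H' H" using sim q qq by auto
        have V': "V \<notin> En H' - Cn \<sigma> H'" using sm V unfolding ssim_def by blast
        have ss: "s' = s" using fs q qq by force
        have "int_asg (pairs (Dom \<sigma> - {V}) w) H' s' V = valI H' s' w V" by (rule tot_pairs[OF wf b(2)])
        also have "\<dots> = s' V"
          by (rule val_nonN[OF wf b(2) b(1) b(3) V']) (use PA_sub[OF wf b(2), of V] RanS_mem[OF w] in blast)
        finally show ?thesis using qq ss True by simp
      qed
      then have C: "gsat T (Cf (pairs (Dom \<sigma> - {V}) w) (Eq V v))" unfolding gsat_Cf_Eq by blast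
      show ?thesis unfolding Imp_def by (rule gsat_Or_I[OF gsat_empty C]) simp
    next
      case False
      have N: "gsat T (Neg (Eq V v))"
        unfolding gsat.simps(3)
      proof
        fix p assume "p \<in> T"
        then have "fst p = s" using fs by blast
        then show "\<not> gsat {p} (Eq V v)" unfolding gsat_Eq_alt using False by simp
      qed
      show ?thesis unfolding Imp_def by (rule gsat_Or_I[OF N gsat_empty]) simp
    qed
  qed
qed

end



definition Sset :: "('v,'a) sig \<Rightarrow> ('v,'a) team \<Rightarrow> ('v,'a) fml set" where
  "Sset \<sigma> T = {And (Theta \<sigma> {s}) (Phi \<sigma> F) | s F.
                          s \<in> fst ` T \<and> F \<in> Sys \<sigma> \<and> \<not> tprec \<sigma> {(s,F)} T}"

lemma Xi_alt: "Xi \<sigma> T = Or (chik \<sigma> (card (quotT \<sigma> T) - 1))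
        (Or (Theta \<sigma> (Asg \<sigma> - fst ` T)) (BigOr (lst (Sset \<sigma> T))))"
  unfolding Xi_def Sset_def ..

lemma uniform_alt: "uniform \<sigma> T \<longleftrightarrow> (\<forall>p\<in>T. \<forall>q\<in>T. ssim \<sigma> (snd p) (snd q))"
  unfolding uniform_def by (simp add: split_beta)

context
  fixes \<sigma> :: "('v,'a) sig"
  assumes wf: "wf_sig \<sigma>"
begin

lemma fin_Sys: "finite (Sys \<sigma>)"
proof -
  let ?D = "Dom \<sigma>"
  define enc :: "('v,'a) sysf \<Rightarrow> _" where "enc F = (En F, restrict (PA F) ?D, restrict (Fn F) ?D)" for F
  define C where "C V = insert (\<lambda>_. undefined) (\<Union>P\<in>Pow ?D. PiE (RanS \<sigma> P) (\<lambda>_. Ran \<sigma> V))" for V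
  have inj: "inj_on enc (Sys \<sigma>)"
  proof (rule inj_onI)
    fix F G assume F: "F \<in> Sys \<sigma>" and G: "G \<in> Sys \<sigma>" and e: "enc F = enc G"
    have E: "En F = En G" using e unfolding enc_def by simp
    have r1: "restrict (PA F) ?D = restrict (PA G) ?D" using e unfolding enc_def by simp
    have r2: "restrict (Fn F) ?D = restrict (Fn G) ?D" using e unfolding enc_def by simp
    have nF: "PA F V = {} \<and> Fn F V = (\<lambda>_. undefined)" if "V \<notin> En F" for V
      using F that by (simp add: Sys_def wf_sys_def)
    have nG: "PA G V = {} \<and> Fn G V = (\<lambda>_. undefined)" if "V \<notin> En G" for V
      using G that by (simp add: Sys_def wf_sys_def)
    have P: "PA F = PA G"
    proof
      fix V show "PA F V = PA G V"
      proof (cases "V \<in> ?D")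
        case True then show ?thesis using fun_cong[OF r1, of V] by simp
      next
        case False then have "V \<notin> En F" "V \<notin> En G" using Sys_En[OF F] Sys_En[OF G] by blast+
        then show ?thesis using nF nG by simp
      qed
    qed
    have Fn: "Fn F = Fn G"
    proof
      fix V show "Fn F V = Fn G V"
      proof (cases "V \<in> ?D")
        case True then show ?thesis using fun_cong[OF r2, of V] by simp
      next
        case False then have "V \<notin> En F" "V \<notin> En G" using Sys_En[OF F] Sys_En[OF G] by blast+
        then show ?thesis using nF nG by simp
      qed
    qed
    show "F = G" by (rule sysf.equality) (simp_all add: E P Fn)
  qed
  have sub: "enc ` Sys \<sigma> \<subseteq> Pow ?D \<times> PiE ?D (\<lambda>_. Pow ?D) \<times> PiE ?D C"
  proof
    fix x assume "x \<in> enc ` Sys \<sigma>"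
    then obtain F where F: "F \<in> Sys \<sigma>" and x: "x = enc F" by blast
    have a: "En F \<in> Pow ?D" using Sys_En[OF F] by blast
    have b: "restrict (PA F) ?D \<in> PiE ?D (\<lambda>_. Pow ?D)"
      using PA_sub[OF wf F] by (simp add: restrict_PiE_iff) blast
    have c: "Fn F V \<in> C V" if V: "V \<in> ?D" for V
    proof (cases "V \<in> En F")
      case True
      have "Fn F V \<in> RanS \<sigma> (PA F V) \<rightarrow> Ran \<sigma> V" "Fn F V \<in> extensional (RanS \<sigma> (PA F V))"
        using F True by (simp_all add: Sys_def wf_sys_def)
      then have "Fn F V \<in> PiE (RanS \<sigma> (PA F V)) (\<lambda>_. Ran \<sigma> V)" by (simp add: PiE_def)
      moreover have "PA F V \<in> Pow ?D" using PA_sub[OF wf F, of V] by blast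
      ultimately show ?thesis unfolding C_def by blast
    next
      case False
      then have "Fn F V = (\<lambda>_. undefined)" using F by (simp add: Sys_def wf_sys_def)
      then show ?thesis unfolding C_def by simp
    qed
    have d: "restrict (Fn F) ?D \<in> PiE ?D C" using c by (simp add: restrict_PiE_iff)
    show "x \<in> Pow ?D \<times> PiE ?D (\<lambda>_. Pow ?D) \<times> PiE ?D C" using a b d x unfolding enc_def by simp
  qed
  have finC: "finite (C V)" if V: "V \<in> ?D" for V
    unfolding C_def
  proof (rule finite_insert[THEN iffD2], rule finite_UN_I)
    show "finite (Pow ?D)" using fin_Dom[OF wf] by simp
    fix P assume "P \<in> Pow ?D"
    then have "finite (RanS \<sigma> P)" using fin_RanS[OF wf] by blast
    then show "finite (PiE (RanS \<sigma> P) (\<lambda>_. Ran \<sigma> V))" using fin_Ran[OF wf V] by (intro finite_PiE)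
  qed
  have "finite (Pow ?D \<times> PiE ?D (\<lambda>_. Pow ?D) \<times> PiE ?D C)"
    using fin_Dom[OF wf] finC by (intro finite_cartesian_product finite_PiE) auto
  then have "finite (enc ` Sys \<sigma>)" using sub finite_subset by blast
  then show ?thesis using finite_imageD inj by blast
qed

lemma fin_Sset:
  assumes "finite P"
  shows "finite (Sset \<sigma> P)"
proof -
  let ?f = "\<lambda>(s,F). And (Theta \<sigma> {s}) (Phi \<sigma> F)"
  have "Sset \<sigma> P \<subseteq> ?f ` (fst ` P \<times> Sys \<sigma>)"
  proof
    fix x assume "x \<in> Sset \<sigma> P"
    then obtain s F where "x = And (Theta \<sigma> {s}) (Phi \<sigma> F)" "s \<in> fst ` P" "F \<in> Sys \<sigma>"
      unfolding Sset_def by blast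
    then show "x \<in> ?f ` (fst ` P \<times> Sys \<sigma>)" by (intro image_eqI[where x="(s,F)"]) auto
  qed
  moreover have "finite (?f ` (fst ` P \<times> Sys \<sigma>))"
    using assms fin_Sys by (intro finite_imageI finite_cartesian_product) auto
  ultimately show ?thesis using finite_subset by blast
qed

lemma quot_card:
  assumes N: "\<not> ssim \<sigma> F G"
  shows "card (quotT \<sigma> {(s,F),(t,G)}) = 2"
proof -
  have N': "\<not> ssim \<sigma> G F" using N ssim_sym by blast
  have q1: "{q \<in> {(s,F),(t,G)}. papprox \<sigma> (s,F) q} = {(s,F)}"
    using N ssim_refl[of \<sigma> F] by (auto simp: papprox_def)
  have q2: "{q \<in> {(s,F),(t,G)}. papprox \<sigma> (t,G) q} = {(t,G)}"
    using N' ssim_refl[of \<sigma> G] by (auto simp: papprox_def)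
  have "quotT \<sigma> {(s,F),(t,G)} = {{(s,F)},{(t,G)}}" unfolding quotT_def image_insert image_empty q1 q2 ..
  moreover have "(s,F) \<noteq> (t,G)" using N ssim_refl[of \<sigma> F] by auto
  ultimately show ?thesis by simp
qed

lemma subF_single: "subF \<sigma> {(a,H)} F' = (if ssim \<sigma> H F' then {(a,H)} else {})"
  unfolding subF_def by auto

lemma not_rest:
  assumes PS: "P \<subseteq> SPairs \<sigma>" and finP: "finite P" and x: "x \<in> P"
    and g: "gsat T23 (Or (Theta \<sigma> (Asg \<sigma> - fst ` P)) (BigOr (lst (Sset \<sigma> P))))" and xT: "x \<in> T23"
  shows False
proof -
  obtain a K where xx: "x = (a,K)" by fastforce
  have aK: "a \<in> Asg \<sigma>" "K \<in> Sys \<sigma>" "compatible a K" using x xx PS by (auto simp: SPairs_def)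
  have fP: "fst ` P \<subseteq> Asg \<sigma>" using PS by (auto simp: SPairs_def)
  have "gsat {x} (Or (Theta \<sigma> (Asg \<sigma> - fst ` P)) (BigOr (lst (Sset \<sigma> P))))"
    using gsat_mono[OF g] xT by blast
  then have "gsat {(a,K)} (Theta \<sigma> (Asg \<sigma> - fst ` P)) \<or> gsat {(a,K)} (BigOr (lst (Sset \<sigma> P)))"
    unfolding gsat_Or_single xx .
  then show False
  proof
    assume "gsat {(a,K)} (Theta \<sigma> (Asg \<sigma> - fst ` P))"
    then have "a \<in> Asg \<sigma> - fst ` P" using Theta_elem[OF wf _ aK(1)] by blast
    moreover have "a \<in> fst ` P" using x xx by force
    ultimately show False by blast
  next
    assume "gsat {(a,K)} (BigOr (lst (Sset \<sigma> P)))"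
    then obtain \<phi> where \<phi>: "\<phi> \<in> set (lst (Sset \<sigma> P))" "gsat {(a,K)} \<phi>"
      using gsat_BigOr_elem by blast
    then have "\<phi> \<in> Sset \<sigma> P" using set_lst[OF fin_Sset[OF finP]] by blast
    then obtain a' H where \<phi>': "\<phi> = And (Theta \<sigma> {a'}) (Phi \<sigma> H)" "a' \<in> fst ` P" "H \<in> Sys \<sigma>"
      "\<not> tprec \<sigma> {(a',H)} P" unfolding Sset_def by blast
    have "gsat {(a,K)} (Theta \<sigma> {a'})" using \<phi>(2) \<phi>'(1) by simp
    then have "a \<in> {a'}" using Theta_elem[OF wf _ aK(1)] \<phi>'(2) fP by blast
    then have aa: "a' = a" by simp
    have "gsat {(a,K)} (Phi \<sigma> H)" using \<phi>(2) \<phi>'(1) by simp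
    then have KH: "ssim \<sigma> K H" using Phi_sim[OF wf _ \<phi>'(3)] x xx PS by blast
    have eq: "ssim \<sigma> H F' \<longleftrightarrow> ssim \<sigma> K F'" if F': "F' \<in> Sys \<sigma>" for F'
      using ssim_trans[OF wf aK(2) \<phi>'(3) F'] ssim_trans[OF wf \<phi>'(3) aK(2) F'] KH ssim_sym by blast
    have "tprec \<sigma> {(a,H)} P"
      unfolding tprec_def
    proof (intro exI conjI)
      show "{(a,K)} \<subseteq> P" using x xx by simp
      show "tapprox \<sigma> {(a,H)} {(a,K)}" unfolding tapprox_def subF_single using eq by simp
    qed
    then show False using \<phi>'(4) aa by simp
  qed
qed

lemma Phi_part:
  assumes PS: "P \<subseteq> SPairs \<sigma>" and finP: "finite P" and a: "a \<in> fst ` P" and H: "H \<in> Sys \<sigma>"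
    and noK: "\<And>K. (a,K) \<in> P \<Longrightarrow> \<not> ssim \<sigma> K H"
    and Ta: "Ta \<subseteq> SPairs \<sigma>" and fa: "\<forall>p\<in>Ta. fst p = a" and sa: "\<forall>p\<in>Ta. ssim \<sigma> (snd p) H"
  shows "gsat Ta (BigOr (lst (Sset \<sigma> P)))"
proof -
  have ntp: "\<not> tprec \<sigma> {(a,H)} P"
  proof
    assume "tprec \<sigma> {(a,H)} P"
    then obtain R where R: "R \<subseteq> P" "tapprox \<sigma> {(a,H)} R" unfolding tprec_def by blast
    have "fst ` subF \<sigma> {(a,H)} H = fst ` subF \<sigma> R H" using R(2) H unfolding tapprox_def by blast
    moreover have "a \<in> fst ` subF \<sigma> {(a,H)} H" unfolding subF_single using ssim_refl by simp
    ultimately have "a \<in> fst ` subF \<sigma> R H" by simp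
    then obtain K where "(a,K) \<in> R" "ssim \<sigma> K H" unfolding subF_def by force
    then show False using noK R(1) by blast
  qed
  have mem: "And (Theta \<sigma> {a}) (Phi \<sigma> H) \<in> set (lst (Sset \<sigma> P))"
    unfolding set_lst[OF fin_Sset[OF finP]] unfolding Sset_def using a H ntp by blast
  have aA: "{a} \<subseteq> Asg \<sigma>" using a PS by (auto simp: SPairs_def)
  have "gsat Ta (Theta \<sigma> {a})" by (rule Theta_sat[OF wf aA]) (use fa in auto)
  moreover have "gsat Ta (Phi \<sigma> H)" by (rule Phi_sat[OF wf Ta fa sa H])
  ultimately have "gsat Ta (And (Theta \<sigma> {a}) (Phi \<sigma> H))" by simp
  then show ?thesis by (rule gsat_BigOr_member[OF mem])
qed

end



theorem lemma5p23:
  fixes \<sigma> :: "('v,'a) sig" and T :: "('v,'a) team"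
  assumes "wf_sig \<sigma>" and "gteam \<sigma> T"
  shows "(\<forall>(s,F)\<in>SPairs \<sigma>. \<forall>(t,G)\<in>SPairs \<sigma>.
            \<not> ssim \<sigma> F G \<longrightarrow> gsat T (Xi \<sigma> {(s,F),(t,G)}))
         \<longleftrightarrow> uniform \<sigma> T"
proof -
  note wf = assms(1)
  have TS: "T \<subseteq> SPairs \<sigma>" using assms(2) by (simp add: gteam_def)
  have Xi2: "Xi \<sigma> {(s,F),(t,G)} = Or (chi \<sigma>) (Or (Theta \<sigma> (Asg \<sigma> - fst ` {(s,F),(t,G)}))
      (BigOr (lst (Sset \<sigma> {(s,F),(t,G)}))))" if N: "\<not> ssim \<sigma> F G" for s F t G
    unfolding Xi_alt quot_card[OF wf N] by simp
  show ?thesis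
  proof
    assume L: "\<forall>(s,F)\<in>SPairs \<sigma>. \<forall>(t,G)\<in>SPairs \<sigma>. \<not> ssim \<sigma> F G \<longrightarrow> gsat T (Xi \<sigma> {(s,F),(t,G)})"
    have "ssim \<sigma> (snd p) (snd q)" if pq: "p \<in> T" "q \<in> T" for p q
    proof (rule ccontr)
      assume N: "\<not> ssim \<sigma> (snd p) (snd q)"
      obtain s F t G where pp: "p = (s,F)" "q = (t,G)" by fastforce
      have sF: "(s,F) \<in> SPairs \<sigma>" and tG: "(t,G) \<in> SPairs \<sigma>" using pq pp TS by auto
      have N': "\<not> ssim \<sigma> F G" using N pp by simp
      let ?P = "{(s,F),(t,G)}"
      have PS: "?P \<subseteq> SPairs \<sigma>" using sF tG by simp
      have finP: "finite ?P" by simp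
      have "gsat T (Xi \<sigma> ?P)" using L sF tG N' by fastforce
      then obtain T1 T23 where T: "T = T1 \<union> T23" and c: "gsat T1 (chi \<sigma>)"
        and r: "gsat T23 (Or (Theta \<sigma> (Asg \<sigma> - fst ` ?P)) (BigOr (lst (Sset \<sigma> ?P))))"
        unfolding Xi2[OF N'] by auto
      have "x \<in> T1" if x: "x \<in> ?P" for x
      proof (rule ccontr)
        assume "x \<notin> T1"
        moreover have "x \<in> T" using x pq pp by auto
        ultimately have "x \<in> T23" using T by blast
        then show False using not_rest[OF wf PS finP x r] by blast
      qed
      then have "?P \<subseteq> T1" by blast
      then have "gsat ?P (chi \<sigma>)" using gsat_mono[OF c] by blast
      then have "ssim \<sigma> F G" by (rule chi_fail[OF wf sF tG])
      then show False using N' by simp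
    qed
    then show "uniform \<sigma> T" unfolding uniform_alt by blast
  next
    assume U: "uniform \<sigma> T"
    have Usim: "\<And>p q. p \<in> T \<Longrightarrow> q \<in> T \<Longrightarrow> ssim \<sigma> (snd p) (snd q)"
      using U unfolding uniform_alt by blast
    have main: "gsat T (Xi \<sigma> {(s,F),(t,G)})"
      if sF: "(s,F) \<in> SPairs \<sigma>" and tG: "(t,G) \<in> SPairs \<sigma>" and N: "\<not> ssim \<sigma> F G" for s F t G
    proof -
      let ?P = "{(s,F),(t,G)}"
      have PS: "?P \<subseteq> SPairs \<sigma>" using sF tG by simp
      have finP: "finite ?P" by simp
      have Fs: "F \<in> Sys \<sigma>" "G \<in> Sys \<sigma>" using sF tG by (auto simp: SPairs_def)
      define Tr where "Tr = {p\<in>T. fst p \<notin> {s,t}}"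
      define Ts where "Ts = {p\<in>T. fst p = s}"
      define Tt where "Tt = {p\<in>T. fst p = t}"
      have Tsplit: "T = Ts \<union> Tt \<union> Tr" unfolding Ts_def Tt_def Tr_def by blast
      have gTr: "gsat Tr (Theta \<sigma> (Asg \<sigma> - fst ` ?P))"
      proof (rule Theta_sat[OF wf])
        show "Asg \<sigma> - fst ` ?P \<subseteq> Asg \<sigma>" by blast
        show "fst ` Tr \<subseteq> Asg \<sigma> - fst ` ?P" using TS unfolding Tr_def by (auto simp: SPairs_def)
      qed
      have TsS: "Ts \<subseteq> SPairs \<sigma>" "Tt \<subseteq> SPairs \<sigma>" using TS unfolding Ts_def Tt_def by auto
      have cs: "gsat Ts (chi \<sigma>)"
        by (rule chi_sat[OF wf TsS(1)]) (use Usim in \<open>auto simp: Ts_def\<close>)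
      have ct: "gsat Tt (chi \<sigma>)"
        by (rule chi_sat[OF wf TsS(2)]) (use Usim in \<open>auto simp: Tt_def\<close>)
      have "\<exists>T1 T3. T = T1 \<union> (Tr \<union> T3) \<and> gsat T1 (chi \<sigma>) \<and> gsat T3 (BigOr (lst (Sset \<sigma> ?P)))"
      proof (cases "s = t \<or> Ts = {} \<or> Tt = {}")
        case True
        then show ?thesis
        proof (elim disjE)
          assume "s = t"
          then have "Tt = Ts" unfolding Ts_def Tt_def by simp
          then show ?thesis using cs Tsplit by (intro exI[of _ Ts] exI[of _ "{}"]) auto
        next
          assume "Ts = {}"
          then show ?thesis using ct Tsplit by (intro exI[of _ Tt] exI[of _ "{}"]) auto
        next
          assume "Tt = {}"
          then show ?thesis using cs Tsplit by (intro exI[of _ Ts] exI[of _ "{}"]) auto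
        qed
      next
        case False
        then have st: "s \<noteq> t" and "Ts \<noteq> {}" "Tt \<noteq> {}" by auto
        then obtain p1 p2 where p1: "p1 \<in> Ts" and p2: "p2 \<in> Tt" by blast
        have p1T: "p1 \<in> T" and p2T: "p2 \<in> T" using p1 p2 unfolding Ts_def Tt_def by auto
        have H1: "snd p1 \<in> Sys \<sigma>" and H2: "snd p2 \<in> Sys \<sigma>"
          using p1T p2T TS by (auto simp: SPairs_def)
        have h12: "ssim \<sigma> (snd p1) (snd p2)" using Usim p1T p2T .
        show ?thesis
        proof (cases "ssim \<sigma> (snd p1) F")
          case False
          have "gsat Ts (BigOr (lst (Sset \<sigma> ?P)))"
          proof (rule Phi_part[OF wf PS finP _ H1 _ TsS(1)])
            show "s \<in> fst ` ?P" by simp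
            fix K assume "(s,K) \<in> ?P"
            then have "K = F" using st by auto
            then show "\<not> ssim \<sigma> K (snd p1)" using False ssim_sym by blast
          next
            show "\<forall>p\<in>Ts. fst p = s" unfolding Ts_def by simp
            show "\<forall>p\<in>Ts. ssim \<sigma> (snd p) (snd p1)" using Usim p1T unfolding Ts_def by blast
          qed
          then show ?thesis using ct Tsplit by (intro exI[of _ Tt] exI[of _ Ts]) auto
        next
          case True
          have nG: "\<not> ssim \<sigma> (snd p2) G"
          proof
            assume "ssim \<sigma> (snd p2) G"
            moreover have "ssim \<sigma> F (snd p2)"
              using ssim_trans[OF wf Fs(1) H1 H2] ssim_sym[OF True] h12 by blast
            ultimately have "ssim \<sigma> F G" using ssim_trans[OF wf Fs(1) H2 Fs(2)] by blast
            then show False using N by simp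
          qed
          have "gsat Tt (BigOr (lst (Sset \<sigma> ?P)))"
          proof (rule Phi_part[OF wf PS finP _ H2 _ TsS(2)])
            show "t \<in> fst ` ?P" by simp
            fix K assume "(t,K) \<in> ?P"
            then have "K = G" using st by auto
            then show "\<not> ssim \<sigma> K (snd p2)" using nG ssim_sym by blast
          next
            show "\<forall>p\<in>Tt. fst p = t" unfolding Tt_def by simp
            show "\<forall>p\<in>Tt. ssim \<sigma> (snd p) (snd p2)" using Usim p2T unfolding Tt_def by blast
          qed
          then show ?thesis using cs Tsplit by (intro exI[of _ Ts] exI[of _ Tt]) auto
        qed
      qed
      then obtain T1 T3 where T13: "T = T1 \<union> (Tr \<union> T3)" "gsat T1 (chi \<sigma>)"
        "gsat T3 (BigOr (lst (Sset \<sigma> ?P)))" by blast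
      show ?thesis unfolding Xi2[OF N]
        by (rule gsat_Or_I[OF T13(2) gsat_Or_I[OF gTr T13(3) refl] T13(1)])
    qed
    show "\<forall>(s,F)\<in>SPairs \<sigma>. \<forall>(t,G)\<in>SPairs \<sigma>. \<not> ssim \<sigma> F G \<longrightarrow> gsat T (Xi \<sigma> {(s,F),(t,G)})"
      using main by blast
  qed
qed


end
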